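(* Let $T_1$ and $T_2$ be two tilings of a simply connected $2$-dimensional cubiculated region $R$ such that $T_1\cup T_2$ is a collection of perimeter cycles $\mathcal{C}_1,\dots,\mathcal{C}_r$. Then there exist a sequence of flip moves $(D_{1_1},D_{2_1}),\dots,(D_{1_s},D_{2_s})$ taking $T_1$ to a tiling $T_1'$ and a sequence of flip moves $(D'_{1_1},D'_{2_1}),\dots,(D'_{1_t},D'_{2_t})$ taking $T_2$ to a tiling $T_2'$ such that $T_1'\cup T_2'$ is a collection of contractible cycles. In particular, writing $P_0=T_1$, $P_i=(P_{i-1}\setminus D_{1_i})\cup D_{2_i}$ (so $P_s=T_1'$) and $Q_0=T_2$, $Q_j=(Q_{j-1}\setminus D'_{1_j})\cup D'_{2_j}$ (so $Q_t=T_2'$), one has $$B_{T_1,T_2}=\sum_{i=1}^{s} y^{P_{i-1}\setminus D_{1_i}}\big(y^{D_{1_i}}-y^{D_{2_i}}\big)+B_{T_1',T_2'}+\sum_{j=1}^{t} y^{Q_{j-1}\setminus D'_{1_j}}\big(y^{D'_{2_j}}-y^{D'_{1_j}}\big),$$ where each binomial $y^{D_{1_i}}-y^{D_{2_i}}$ and $y^{D'_{2_j}}-y^{D'_{1_j}}$ has degree $2$.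
   Context: A $2$-dimensional cubiculated region $R$ is a finite union of unit lattice squares in the plane; it is simply connected if it has no holes (every simple closed curve in it can be shrunk to a point within it). A domino is two squares of $R$ sharing an edge; a tiling is a set of dominoes covering every square exactly once. $G_R$ has a vertex for each square (drawn at its center, so $G_R$ is drawn in the plane as a subgraph of the integer grid graph) and an edge between squares sharing an edge; tilings are perfect matchings. $T_1\cup T_2$ denotes the multigraph union, a disjoint union of even cycles covering all vertices, where an edge in both tilings forms a $2$-cycle. A flip move $(D_1,D_2)$ on a tiling replaces two dominoes $D_1$ forming a $2\times 2$ square by the two perpendicular dominoes $D_2$ covering the same square. A cycle of $G_R$ (or of $T_1\cup T_2$) is contractible if, in the planar drawing, its interior contains no vertices of $G_R$; $2$-cycles are contractible. A cycle of $T_1\cup T_2$ is a perimeter cycle if its interior contains no cycles of $T_1\cup T_2$ other than (possibly) $2$-cycles. In $\mathbb{K}[y_e : e\in E(G_R)]$, $y^{E_0}=\prod_{e\in E_0}y_e$ and $B_{T_1,T_2}=y^{T_1}-y^{T_2}$. *)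

theory Defs
  imports "HOL-Analysis.Analysis" "HOL-Library.Poly_Mapping"
begin

type_synonym square = "int \<times> int"
type_synonym edge = "square set"

definition center :: "square \<Rightarrow> real \<times> real" where
  "center p = (real_of_int (fst p), real_of_int (snd p))"

definition unit_sq :: "square \<Rightarrow> (real \<times> real) set" where
  "unit_sq p = cbox (center p - (1/2, 1/2)) (center p + (1/2, 1/2))"

definition region_set :: "square set \<Rightarrow> (real \<times> real) set" where
  "region_set R = (\<Union>p\<in>R. unit_sq p)"

definition simply_connected_region :: "square set \<Rightarrow> bool" where
  "simply_connected_region R \<longleftrightarrow> finite R \<and>
     (\<forall>g. path g \<and> pathfinish g = pathstart g \<and> path_image g \<subseteq> region_set R \<longrightarrow>
          homotopic_loops (region_set R) g (linepath (pathstart g) (pathstart g)))"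

definition adjacent :: "square \<Rightarrow> square \<Rightarrow> bool" where
  "adjacent p q \<longleftrightarrow> \<bar>fst p - fst q\<bar> + \<bar>snd p - snd q\<bar> = 1"

definition grid_edges :: "square set \<Rightarrow> edge set" where
  "grid_edges R = {{p, q} | p q. p \<in> R \<and> q \<in> R \<and> adjacent p q}"

definition is_tiling :: "square set \<Rightarrow> edge set \<Rightarrow> bool" where
  "is_tiling R T \<longleftrightarrow> T \<subseteq> grid_edges R \<and> (\<forall>p\<in>R. \<exists>!e. e \<in> T \<and> p \<in> e)"

text \<open>Cycles of the union T1 \<union> T2 = connected components (vertex sets) of the graph on R
  with edge set T1 \<union> T2 (an edge in both tilings gives a 2-cycle).\<close>
definition comp_of :: "edge set \<Rightarrow> square \<Rightarrow> square set" where
  "comp_of E p = {q. (\<lambda>a b. {a, b} \<in> E)\<^sup>*\<^sup>* p q}"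

definition union_cycles :: "square set \<Rightarrow> edge set \<Rightarrow> edge set \<Rightarrow> square set set" where
  "union_cycles R T1 T2 = comp_of (T1 \<union> T2) ` R"

definition drawing :: "edge set \<Rightarrow> square set \<Rightarrow> (real \<times> real) set" where
  "drawing E V = \<Union>{closed_segment (center p) (center q) | p q. {p, q} \<in> E \<and> p \<in> V \<and> q \<in> V}"

definition cycle_interior :: "edge set \<Rightarrow> square set \<Rightarrow> (real \<times> real) set" where
  "cycle_interior E V = inside (drawing E V)"

definition contractible_cycle :: "square set \<Rightarrow> edge set \<Rightarrow> square set \<Rightarrow> bool" where
  "contractible_cycle R E V \<longleftrightarrow> (\<forall>p\<in>R. center p \<notin> cycle_interior E V)"

definition perimeter_cycle :: "square set \<Rightarrow> edge set \<Rightarrow> edge set \<Rightarrow> square set \<Rightarrow> bool" where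
  "perimeter_cycle R T1 T2 V \<longleftrightarrow>
     (\<forall>W\<in>union_cycles R T1 T2. W \<noteq> V \<and> card W \<noteq> 2 \<longrightarrow>
        \<not> (drawing (T1 \<union> T2) W \<subseteq> cycle_interior (T1 \<union> T2) V))"

definition hdom :: "int \<Rightarrow> int \<Rightarrow> edge set" where
  "hdom a b = {{(a, b), (a + 1, b)}, {(a, b + 1), (a + 1, b + 1)}}"

definition vdom :: "int \<Rightarrow> int \<Rightarrow> edge set" where
  "vdom a b = {{(a, b), (a, b + 1)}, {(a + 1, b), (a + 1, b + 1)}}"

definition flip_move :: "edge set \<Rightarrow> edge set \<Rightarrow> edge set \<Rightarrow> bool" where
  "flip_move T D1 D2 \<longleftrightarrow> D1 \<subseteq> T \<and>
     (\<exists>a b. (D1 = hdom a b \<and> D2 = vdom a b) \<or> (D1 = vdom a b \<and> D2 = hdom a b))"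

fun flip_seq :: "edge set \<Rightarrow> (nat \<Rightarrow> edge set) \<Rightarrow> (nat \<Rightarrow> edge set) \<Rightarrow> nat \<Rightarrow> edge set" where
  "flip_seq T D1 D2 0 = T"
| "flip_seq T D1 D2 (Suc i) = (flip_seq T D1 D2 i - D1 (Suc i)) \<union> D2 (Suc i)"

definition valid_flips :: "edge set \<Rightarrow> (nat \<Rightarrow> edge set) \<Rightarrow> (nat \<Rightarrow> edge set) \<Rightarrow> nat \<Rightarrow> bool" where
  "valid_flips T D1 D2 s \<longleftrightarrow> (\<forall>i\<in>{1..s}. flip_move (flip_seq T D1 D2 (i - 1)) (D1 i) (D2 i))"

text \<open>Polynomial ring K[y_e] as finitely supported maps from monomials to K.\<close>
type_synonym 'k epoly = "(edge \<Rightarrow>\<^sub>0 nat) \<Rightarrow>\<^sub>0 'k"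

definition yvar :: "edge \<Rightarrow> 'k::field epoly" where
  "yvar e = Poly_Mapping.single (Poly_Mapping.single e 1) 1"

definition ymon :: "edge set \<Rightarrow> 'k::field epoly" where
  "ymon E0 = (\<Prod>e\<in>E0. yvar e)"

definition Bpoly :: "edge set \<Rightarrow> edge set \<Rightarrow> 'k::field epoly" where
  "Bpoly T1 T2 = ymon T1 - ymon T2"

definition mon_degree :: "(edge \<Rightarrow>\<^sub>0 nat) \<Rightarrow> nat" where
  "mon_degree m = (\<Sum>e\<in>Poly_Mapping.keys m. Poly_Mapping.lookup m e)"

definition has_degree :: "'k::field epoly \<Rightarrow> nat \<Rightarrow> bool" where
  "has_degree f d \<longleftrightarrow> f \<noteq> 0 \<and> (\<forall>m\<in>Poly_Mapping.keys f. mon_degree m = d)"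

end

theory Submission
  imports Defs "HOL-Complex_Analysis.Complex_Analysis"
begin

lemma region_set_compact: "finite R \<Longrightarrow> compact (region_set R)"
  unfolding region_set_def unit_sq_def by (intro compact_UN) auto

lemma region_set_ANR: "finite R \<Longrightarrow> ANR (region_set R)"
  unfolding region_set_def
  apply (rule ANR_finite_Union_convex_closed)
  by (auto simp: unit_sq_def)

lemma region_set_lpc: "finite R \<Longrightarrow> locally path_connected (region_set R)"
  using ANR_imp_locally_path_connected region_set_ANR by blast

lemma loops_in_component:
  assumes S: "\<And>g. path g \<Longrightarrow> pathfinish g = pathstart g \<Longrightarrow> path_image g \<subseteq> S \<Longrightarrow>
          homotopic_loops S g (linepath (pathstart g) (pathstart g))"
    and C: "C \<in> components S" and lpc: "locally path_connected S"
  shows "simply_connected C"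
proof -
  have pc: "path_connected C"
    using C lpc by (metis components_iff locally_path_connected_connected_component
        path_component_eq_connected_component_set path_connected_path_component)
  have "(\<exists>a. a \<in> C \<and> homotopic_loops C p (linepath a a))"
    if p: "path p" "path_image p \<subseteq> C" "pathfinish p = pathstart p" for p
  proof -
    have CS: "C \<subseteq> S" using C in_components_subset by blast
    have ps: "pathstart p \<in> C" using p pathstart_in_path_image by blast
    have "homotopic_loops S p (linepath (pathstart p) (pathstart p))"
      using S p CS by blast
    then obtain h where h: "continuous_on ({0..1::real} \<times> {0..1}) h"
       "h \<in> ({0..1} \<times> {0..1}) \<rightarrow> S" "\<forall>x \<in> {0..1}. h(0,x) = p x"
       "\<forall>x \<in> {0..1}. h(1,x) = linepath (pathstart p) (pathstart p) x"
       "\<forall>t \<in> {0..1}. pathfinish(h \<circ> Pair t) = pathstart(h \<circ> Pair t)"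
      unfolding homotopic_loops by blast
    have con: "connected (h ` ({0..1} \<times> {0..1}))"
      by (intro connected_continuous_image h(1) connected_Times) auto
    have "h (0,0) = pathstart p" using h(3) by (simp add: pathstart_def)
    have Ceq: "C = connected_component_set S (pathstart p)"
      using C ps by (metis components_iff connected_component_eq)
    have "h ` ({0..1} \<times> {0..1}) \<subseteq> C"
      unfolding Ceq
      apply (rule connected_component_maximal)
      using \<open>h (0,0) = pathstart p\<close> con h(2) by force+
    then have "homotopic_loops C p (linepath (pathstart p) (pathstart p))"
      unfolding homotopic_loops using h by blast
    then show ?thesis using ps by blast
  qed
  then show ?thesis
    using pc simply_connected_eq_contractible_loop_some by blast
qed

lemma region_Borsukian:
  assumes "simply_connected_region R"
  shows "Borsukian (region_set R)"
proof -
  have fin: "finite R" using assms simply_connected_region_def by blast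
  note lpc = region_set_lpc[OF fin]
  show ?thesis
  proof (rule Borsukian_componentwise)
    show "locally connected (region_set R) \<or> compact (region_set R)"
      using region_set_compact[OF fin] by blast
    fix C assume C: "C \<in> components (region_set R)"
    have "simply_connected C"
      by (rule loops_in_component[OF _ C lpc]) (use assms in \<open>auto simp: simply_connected_region_def\<close>)
    moreover have "locally path_connected C" using locally_path_connected_components[OF lpc C] .
    ultimately show "Borsukian C" by (rule simply_connected_imp_Borsukian)
  qed
qed

definition cplx :: "real \<times> real \<Rightarrow> complex" where "cplx p = Complex (fst p) (snd p)"

lemma c2_linear: "linear cplx"
  unfolding cplx_def
  by (rule linearI) (auto simp: complex_eq_iff scaleR_conv_of_real)

lemma c2_inj: "inj cplx"
  unfolding cplx_def inj_on_def by (auto simp: complex_eq_iff prod_eq_iff)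

lemma region_complement_connected:
  assumes "simply_connected_region R"
  shows "connected (- region_set R)"
proof -
  have fin: "finite R" using assms simply_connected_region_def by blast
  have "Borsukian (cplx ` region_set R)"
    using Borsukian_injective_linear_image[OF c2_linear c2_inj] region_Borsukian[OF assms] by blast
  moreover have "compact (cplx ` region_set R)"
    using region_set_compact[OF fin] c2_linear compact_continuous_image linear_continuous_on
    by (metis linear_linear)
  ultimately have con: "connected (- (cplx ` region_set R))"
    using Borsukian_separation_compact by blast
  define g where "g = (\<lambda>z::complex. (Re z, Im z))"
  have "g ` (- (cplx ` region_set R)) = - region_set R"
  proof -
    have gc: "g (cplx p) = p" for p by (simp add: g_def cplx_def)
    have cg: "cplx (g z) = z" for z by (simp add: g_def cplx_def)
    show ?thesis
    proof (intro equalityI subsetI)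
      fix p assume "p \<in> - region_set R"
      then have "cplx p \<in> - (cplx ` region_set R)" using c2_inj unfolding inj_def by blast
      then show "p \<in> g ` (- (cplx ` region_set R))" using gc by (metis imageI)
    next
      fix p assume "p \<in> g ` (- (cplx ` region_set R))"
      then show "p \<in> - region_set R" using cg by (metis ComplD ComplI image_eqI imageE)
    qed
  qed
  moreover have "continuous_on UNIV g" unfolding g_def by (intro continuous_intros)
  ultimately show ?thesis
    by (metis con connected_continuous_image continuous_on_subset subset_UNIV)
qed

lemma mem_unit_sq: "z \<in> unit_sq c \<longleftrightarrow>
   real_of_int (fst c) - 1/2 \<le> fst z \<and> fst z \<le> real_of_int (fst c) + 1/2 \<and>
   real_of_int (snd c) - 1/2 \<le> snd z \<and> snd z \<le> real_of_int (snd c) + 1/2"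
proof -
  obtain a b where c: "c = (a,b)" by fastforce
  obtain x y where z: "z = (x,y)" by fastforce
  have "unit_sq c = cbox (real_of_int a - 1/2, real_of_int b - 1/2) (real_of_int a + 1/2, real_of_int b + 1/2)"
    by (simp add: unit_sq_def center_def c)
  then show ?thesis unfolding z c by simp
qed

lemma int_lt_real: "real_of_int a < real_of_int b + 1 \<Longrightarrow> a \<le> b"
proof -
  assume "real_of_int a < real_of_int b + 1"
  then have "real_of_int a < real_of_int (b + 1)" by simp
  then have "a < b + 1" by (simp only: of_int_less_iff)
  then show ?thesis by simp
qed

lemma center_in_unit_sq: "center c \<in> unit_sq c"
  by (simp add: mem_unit_sq center_def)

lemma center_not_other: "center c \<in> unit_sq c' \<Longrightarrow> c' = c"
proof -
  assume "center c \<in> unit_sq c'"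
  then have "real_of_int (fst c') < real_of_int (fst c) + 1" "real_of_int (fst c) < real_of_int (fst c') + 1"
    "real_of_int (snd c') < real_of_int (snd c) + 1" "real_of_int (snd c) < real_of_int (snd c') + 1"
    unfolding mem_unit_sq center_def by auto
  then have "fst c' \<le> fst c" "fst c \<le> fst c'" "snd c' \<le> snd c" "snd c \<le> snd c'"
    using int_lt_real by blast+
  then show "c' = c" by (simp add: prod_eq_iff)
qed

lemma fst_dist_le: "\<bar>fst y - fst (z::real\<times>real)\<bar> \<le> dist y z"
  by (metis dist_fst_le dist_real_def)

lemma snd_dist_le: "\<bar>snd y - snd (z::real\<times>real)\<bar> \<le> dist y z"
  by (metis dist_snd_le dist_real_def)

definition rcell :: "real \<times> real \<Rightarrow> square" where
  "rcell y = (floor (fst y + 1/2), floor (snd y + 1/2))"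

lemma rcell_in: "y \<in> unit_sq (rcell y)"
proof -
  have a: "real_of_int (floor (t+1/2)) \<le> t + 1/2" "t + 1/2 < real_of_int (floor (t+1/2)) + 1" for t :: real
      by linarith+
  show ?thesis unfolding mem_unit_sq rcell_def using a[of "fst y"] a[of "snd y"] by (simp only: fst_conv snd_conv) linarith
qed

lemma cells_near:
  "\<exists>e>0. \<forall>y c. dist y z < e \<longrightarrow> y \<in> unit_sq c \<longrightarrow> z \<in> unit_sq c"
proof -
  define N where "N = {c. real_of_int (fst c) \<le> fst z + 2 \<and> fst z \<le> real_of_int (fst c) + 2 \<and>
     real_of_int (snd c) \<le> snd z + 2 \<and> snd z \<le> real_of_int (snd c) + 2 \<and> z \<notin> unit_sq c}"
  have "N \<subseteq> {floor (fst z) - 3 .. floor (fst z) + 3} \<times> {floor (snd z) - 3 .. floor (snd z) + 3}"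
    unfolding N_def by auto linarith+
  then have finN: "finite N" by (rule finite_subset) auto
  define e where "e = Min (insert 1 ((\<lambda>c. infdist z (unit_sq c)) ` N))"
  have pos: "infdist z (unit_sq c) > 0" if "c \<in> N" for c
    apply (rule infdist_pos_not_in_closed)
    using that unfolding N_def
    by (auto simp: unit_sq_def intro: closed_cbox) (metis center_in_unit_sq empty_iff unit_sq_def)
  have epos: "e > 0" unfolding e_def using finN pos by (subst Min_gr_iff) auto
  have ele1: "e \<le> 1" unfolding e_def using finN by (intro Min_le) auto
  have ele: "e \<le> infdist z (unit_sq c)" if "c \<in> N" for c
    unfolding e_def using finN that by (intro Min_le) auto
  show ?thesis
  proof (intro exI[of _ e] conjI allI impI epos)
    fix y c assume d: "dist y z < e" and y: "y \<in> unit_sq c"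
    show "z \<in> unit_sq c"
    proof (rule ccontr)
      assume nz: "z \<notin> unit_sq c"
      have "\<bar>fst y - fst z\<bar> < 1" "\<bar>snd y - snd z\<bar> < 1"
        using fst_dist_le[of y z] snd_dist_le[of y z] d ele1 by linarith+
      then have "c \<in> N" using y nz unfolding N_def mem_unit_sq by auto
      then have "e \<le> infdist z (unit_sq c)" by (rule ele)
      also have "\<dots> \<le> dist z y" using y by (rule infdist_le)
      finally show False using d by (simp add: dist_commute)
    qed
  qed
qed

definition nadj :: "square set \<Rightarrow> square \<Rightarrow> square \<Rightarrow> bool" where
  "nadj R c c' \<longleftrightarrow> c \<notin> R \<and> c' \<notin> R \<and> adjacent c c'"

lemma region_set_iff: "z \<in> region_set R \<longleftrightarrow> (\<exists>c\<in>R. z \<in> unit_sq c)"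
  unfolding region_set_def by auto

lemma share_point_reach:
  assumes "z \<in> unit_sq c1" "z \<in> unit_sq c2" "z \<notin> region_set R"
  shows "(nadj R)\<^sup>*\<^sup>* c1 c2"
proof -
  obtain a1 b1 a2 b2 where c: "c1 = (a1,b1)" "c2 = (a2,b2)" by fastforce
  have n1: "c1 \<notin> R" "c2 \<notin> R" using assms region_set_iff by blast+
  have n3: "(a1,b2) \<notin> R" using assms region_set_iff unfolding c mem_unit_sq by fastforce
  have "real_of_int a1 < real_of_int a2 + 2" "real_of_int a2 < real_of_int a1 + 2"
     "real_of_int b1 < real_of_int b2 + 2" "real_of_int b2 < real_of_int b1 + 2"
    using assms unfolding c mem_unit_sq by auto
  then have "a1 < a2 + 2" "a2 < a1 + 2" "b1 < b2 + 2" "b2 < b1 + 2"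
    by (metis of_int_add of_int_less_iff of_int_numeral)+
  then have da: "\<bar>a1 - a2\<bar> \<le> 1" "\<bar>b1 - b2\<bar> \<le> 1" by auto
  have s1: "(nadj R)\<^sup>*\<^sup>* (a1,b1) (a1,b2)"
  proof (cases "b1 = b2")
    case False then show ?thesis using n1 n3 da c unfolding nadj_def adjacent_def
      by (intro r_into_rtranclp) auto
  qed auto
  have s2: "(nadj R)\<^sup>*\<^sup>* (a1,b2) (a2,b2)"
  proof (cases "a1 = a2")
    case False then show ?thesis using n1 n3 da c unfolding nadj_def adjacent_def
      by (intro r_into_rtranclp) auto
  qed auto
  show ?thesis using s1 s2 c by auto
qed

lemma nonR_component_unbounded:
  assumes sc: "simply_connected_region R" and c: "c \<notin> R"
  shows "\<exists>c'. (nadj R)\<^sup>*\<^sup>* c c' \<and> (\<bar>fst c'\<bar> > B \<or> \<bar>snd c'\<bar> > B)"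
proof (rule ccontr)
  assume "\<not> ?thesis"
  then have bd: "\<And>c'. (nadj R)\<^sup>*\<^sup>* c c' \<Longrightarrow> \<bar>fst c'\<bar> \<le> B \<and> \<bar>snd c'\<bar> \<le> B" by force
  define C where "C = {c'. (nadj R)\<^sup>*\<^sup>* c c'}"
  have "C \<subseteq> {-B..B} \<times> {-B..B}"
  proof
    fix x assume "x \<in> C"
    then have "\<bar>fst x\<bar> \<le> B \<and> \<bar>snd x\<bar> \<le> B" using bd unfolding C_def by blast
    then show "x \<in> {-B..B} \<times> {-B..B}" by (cases x) (auto simp: abs_le_iff)
  qed
  then have finC: "finite C" by (rule finite_subset) auto
  define X where "X = (\<Union>p\<in>C. unit_sq p)"
  have finR: "finite R" using sc simply_connected_region_def by blast
  have Xc: "compact X" unfolding X_def unit_sq_def using finC by (intro compact_UN) auto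
  define A where "A = - region_set R"
  have conA: "connected A" unfolding A_def by (rule region_complement_connected[OF sc])
  have cl: "closedin (top_of_set A) (A \<inter> X)"
    using Xc by (simp add: closedin_closed_Int compact_imp_closed)
  have op: "openin (top_of_set A) (A \<inter> X)"
    unfolding openin_contains_ball
  proof (intro conjI ballI)
    show "A \<inter> X \<subseteq> A" by blast
    fix z assume z: "z \<in> A \<inter> X"
    obtain e where e: "e > 0" "\<And>y c. dist y z < e \<Longrightarrow> y \<in> unit_sq c \<Longrightarrow> z \<in> unit_sq c"
      using cells_near[of z] by blast
    obtain c1 where c1: "c1 \<in> C" "z \<in> unit_sq c1" using z unfolding X_def by blast
    have "ball z e \<inter> A \<subseteq> A \<inter> X"
    proof
      fix y assume y: "y \<in> ball z e \<inter> A"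
      have "z \<in> unit_sq (rcell y)" using e(2)[of y "rcell y"] y rcell_in by (auto simp: dist_commute)
      then have "(nadj R)\<^sup>*\<^sup>* c1 (rcell y)"
        using share_point_reach[OF c1(2)] z unfolding A_def by blast
      then have "rcell y \<in> C" using c1(1) unfolding C_def by auto
      then show "y \<in> A \<inter> X" using y rcell_in unfolding X_def by blast
    qed
    then show "\<exists>e>0. ball z e \<inter> A \<subseteq> A \<inter> X" using e(1) by blast
  qed
  have ne: "A \<inter> X \<noteq> {}"
  proof -
    have "center c \<in> X" unfolding X_def C_def using center_in_unit_sq by blast
    moreover have "center c \<notin> region_set R"
      using c center_not_other unfolding region_set_iff by blast
    ultimately show ?thesis unfolding A_def by blast
  qed
  have "A \<inter> X = A" using conA cl op ne unfolding connected_clopen by blast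
  then have "UNIV \<subseteq> X \<union> region_set R" unfolding A_def by blast
  moreover have "bounded (X \<union> region_set R)"
    using Xc region_set_compact[OF finR] by (simp add: compact_imp_bounded)
  ultimately show False using bounded_subset not_bounded_UNIV by blast
qed

type_synonym corner = "int \<times> int"

lemma adjacent_cases:
  assumes "adjacent a b"
  shows "b = (fst a + 1, snd a) \<or> b = (fst a - 1, snd a) \<or> b = (fst a, snd a + 1) \<or> b = (fst a, snd a - 1)"
proof -
  obtain x y u v where ab: "a = (x,y)" "b = (u,v)" by fastforce
  have "\<bar>x - u\<bar> + \<bar>y - v\<bar> = 1" using assms ab by (simp add: adjacent_def)
  then have "(u = x + 1 \<and> v = y) \<or> (u = x - 1 \<and> v = y) \<or> (u = x \<and> v = y + 1) \<or> (u = x \<and> v = y - 1)"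
    by arith
  then show ?thesis using ab by auto
qed

lemma adjacent_sym: "adjacent a b \<Longrightarrow> adjacent b a"
  unfolding adjacent_def by (simp add: abs_minus_commute)

lemma adjacent_simps:
  "adjacent (x,y) (x+1,y)" "adjacent (x,y) (x-1,y)" "adjacent (x,y) (x,y+1)" "adjacent (x,y) (x,y-1)"
  by (auto simp: adjacent_def)

definition lft :: "corner \<Rightarrow> corner \<Rightarrow> square" where
  "lft a b = (if b = (fst a + 1, snd a) then a
     else if b = (fst a, snd a + 1) then (fst a - 1, snd a)
     else if b = (fst a - 1, snd a) then (fst a - 1, snd a - 1)
     else (fst a, snd a - 1))"

definition rgt :: "corner \<Rightarrow> corner \<Rightarrow> square" where
  "rgt a b = lft b a"

definition sigma :: "square \<Rightarrow> int" where
  "sigma c = (if even (fst c + snd c) then 1 else -1)"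

definition omega :: "edge set \<Rightarrow> corner \<Rightarrow> corner \<Rightarrow> int" where
  "omega T a b = sigma (lft a b) * (if {lft a b, rgt a b} \<in> T then -3 else 1)"

lemma adj_elim:
  assumes "adjacent a b"
  obtains x y where "a = (x,y)" "b = (x+1,y)" | x y where "a = (x,y)" "b = (x-1,y)"
    | x y where "a = (x,y)" "b = (x,y+1)" | x y where "a = (x,y)" "b = (x,y-1)"
  using adjacent_cases[OF assms] by (cases a) auto

lemma lft_rgt_adjacent:
  assumes "adjacent a b" shows "adjacent (lft a b) (rgt a b)"
  using assms by (rule adj_elim) (auto simp: lft_def rgt_def adjacent_def)

lemma sigma_adjacent: "adjacent p q \<Longrightarrow> sigma q = - sigma p"
  by (erule adj_elim) (auto simp: sigma_def)

lemma omega_antisym: "adjacent a b \<Longrightarrow> omega T b a = - omega T a b"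
proof -
  assume ab: "adjacent a b"
  have "sigma (lft b a) = - sigma (lft a b)"
    using sigma_adjacent[OF lft_rgt_adjacent[OF ab]] by (simp add: rgt_def)
  moreover have "{lft b a, rgt b a} = {lft a b, rgt a b}" by (auto simp: rgt_def)
  ultimately show ?thesis unfolding omega_def by simp
qed

definition curl :: "(corner \<Rightarrow> corner \<Rightarrow> int) \<Rightarrow> square \<Rightarrow> int" where
  "curl w c = w (fst c, snd c) (fst c + 1, snd c) + w (fst c + 1, snd c) (fst c + 1, snd c + 1)
     + w (fst c + 1, snd c + 1) (fst c, snd c + 1) + w (fst c, snd c + 1) (fst c, snd c)"

lemma lft_ccw:
  "lft (x, y) (x + 1, y) = (x,y)" "lft (x + 1, y) (x + 1, y + 1) = (x,y)"
  "lft (x + 1, y + 1) (x, y + 1) = (x,y)" "lft (x, y + 1) (x, y) = (x,y)"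
  by (auto simp: lft_def)

lemma rgt_ccw:
  "rgt (x, y) (x + 1, y) = (x,y-1)" "rgt (x + 1, y) (x + 1, y + 1) = (x+1,y)"
  "rgt (x + 1, y + 1) (x, y + 1) = (x,y+1)" "rgt (x, y + 1) (x, y) = (x-1,y)"
  by (auto simp: lft_def rgt_def)

lemma tiling_partner:
  assumes "is_tiling R T" "p \<in> R"
  obtains q where "{p,q} \<in> T" "adjacent p q" "\<And>e. e \<in> T \<Longrightarrow> p \<in> e \<Longrightarrow> e = {p,q}"
proof -
  have h: "\<exists>!e. e \<in> T \<and> p \<in> e" using assms unfolding is_tiling_def by blast
  obtain e where e1: "e \<in> T" "p \<in> e" and e2: "\<And>e'. e' \<in> T \<Longrightarrow> p \<in> e' \<Longrightarrow> e' = e"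
  proof (rule ex1E[OF h])
    fix x assume "x \<in> T \<and> p \<in> x" "\<forall>y. y \<in> T \<and> p \<in> y \<longrightarrow> y = x"
    then show ?thesis using that by blast
  qed
  have "e \<in> grid_edges R" using assms e1 unfolding is_tiling_def by blast
  then obtain a b where ab: "e = {a,b}" "a \<in> R" "b \<in> R" "adjacent a b"
    unfolding grid_edges_def by blast
  show ?thesis
  proof (cases "p = a")
    case True
    show ?thesis
    proof (rule that[of b])
      show "{p,b} \<in> T" using True ab e1 by simp
      show "adjacent p b" using True ab by simp
      fix e' assume "e' \<in> T" "p \<in> e'" then show "e' = {p,b}" using e2 True ab by simp
    qed
  next
    case False
    then have pb: "p = b" using ab e1 by auto
    show ?thesis
    proof (rule that[of a])
      show "{p,a} \<in> T" using pb ab e1 by (simp add: insert_commute)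
      show "adjacent p a" using pb ab adjacent_sym by simp
      fix e' assume "e' \<in> T" "p \<in> e'" then show "e' = {p,a}" using e2 pb ab by (simp add: insert_commute)
    qed
  qed
qed

lemma tiling_edge_in_R:
  assumes "is_tiling R T" "{p,q} \<in> T" shows "p \<in> R" "q \<in> R" "adjacent p q"
proof -
  have "{p,q} \<in> grid_edges R" using assms unfolding is_tiling_def by blast
  then obtain a b where ab: "{p,q} = {a,b}" "a \<in> R" "b \<in> R" "adjacent a b"
    unfolding grid_edges_def by blast
  then show "p \<in> R" "q \<in> R" by (auto simp: doubleton_eq_iff)
  show "adjacent p q" using ab by (auto simp: doubleton_eq_iff adjacent_sym)
qed

lemma curl_omega_R:
  assumes T: "is_tiling R T" and c: "c \<in> R"
  shows "curl (omega T) c = 0"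
proof -
  obtain x y where cxy: "c = (x,y)" by fastforce
  obtain q where q: "{c,q} \<in> T" "adjacent c q" "\<And>e. e \<in> T \<Longrightarrow> c \<in> e \<Longrightarrow> e = {c,q}"
    using tiling_partner[OF T c] by blast
  have "sigma (x,y) * ((if {(x,y),(x,y-1)} \<in> T then -3 else 1) + (if {(x,y),(x+1,y)} \<in> T then -3 else 1)
       + (if {(x,y),(x,y+1)} \<in> T then -3 else 1) + (if {(x,y),(x-1,y)} \<in> T then -3 else 1)) = 0"
  proof -
    have qc: "q \<noteq> c" using q(2) by (auto simp: adjacent_def)
    have mem: "{(x,y),r} \<in> T \<longleftrightarrow> r = q" for r
    proof
      assume "{(x,y),r} \<in> T"
      then have "{c,r} = {c,q}" using q(3)[of "{c,r}"] cxy by simp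
      then show "r = q" using qc by (auto simp: doubleton_eq_iff)
    next
      assume "r = q" then show "{(x,y),r} \<in> T" using q(1) cxy by simp
    qed
    show ?thesis
      using adjacent_cases[OF q(2)] unfolding cxy mem by (elim disjE) (simp_all add: sigma_def)
  qed
  moreover have "curl (omega T) (x,y) = sigma (x,y) * (if {(x,y),(x,y-1)} \<in> T then -3 else 1)
     + sigma (x,y) * (if {(x,y),(x+1,y)} \<in> T then -3 else 1)
     + sigma (x,y) * (if {(x,y),(x,y+1)} \<in> T then -3 else 1)
     + sigma (x,y) * (if {(x,y),(x-1,y)} \<in> T then -3 else 1)"
    unfolding curl_def omega_def fst_conv snd_conv lft_ccw rgt_ccw by simp
  ultimately show ?thesis unfolding cxy by (simp only: distrib_left)
qed

definition ssum :: "(int \<Rightarrow> int) \<Rightarrow> int \<Rightarrow> int \<Rightarrow> int" where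
  "ssum g a b = (\<Sum>k\<in>{a..<b}. g k) - (\<Sum>k\<in>{b..<a}. g k)"

lemma ssum_same[simp]: "ssum g a a = 0"
  by (simp add: ssum_def)

lemma ssum_succ: "ssum g a (b+1) = ssum g a b + g b"
proof (cases "a \<le> b")
  case True
  then have "{a..<b+1} = insert b {a..<b}" by auto
  moreover have "{b+1..<a} = {}" "{b..<a} = {}" using True by auto
  ultimately show ?thesis unfolding ssum_def by simp
next
  case False
  then have "{b..<a} = insert b {b+1..<a}" by auto
  moreover have "{a..<b+1} = {}" "{a..<b} = {}" using False by auto
  ultimately show ?thesis unfolding ssum_def by simp
qed

lemma ssum_pred: "ssum g a (b - 1) = ssum g a b - g (b - 1)"
  using ssum_succ[of g a "b - 1"] by simp

lemma ssum_add: "ssum (\<lambda>k. f k + g k) a b = ssum f a b + ssum g a b"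
  unfolding ssum_def by (simp add: sum.distrib)

lemma ssum_diff: "ssum (\<lambda>k. f k - g k) a b = ssum f a b - ssum g a b"
  unfolding ssum_def by (simp add: sum_subtractf)

lemma ssum_uminus: "ssum (\<lambda>k. - f k) a b = - ssum f a b"
  unfolding ssum_def by (simp add: sum_negf)

lemma ssum_tele: "ssum (\<lambda>k. h (k+1) - h k) a b = h b - h a"
proof (induct b rule: int_induct[where k = a])
  case base then show ?case by simp
next
  case (step1 i) then show ?case by (simp add: ssum_succ)
next
  case (step2 i) then show ?case by (simp add: ssum_pred)
qed

lemma ssum_zero: "(\<And>k. g k = 0) \<Longrightarrow> ssum g a b = 0"
  unfolding ssum_def by simp

lemma ssum_dvd: "(\<And>k. (m::int) dvd g k) \<Longrightarrow> m dvd ssum g a b"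
  unfolding ssum_def by (intro dvd_diff dvd_sum) auto

lemma ssum_cong_range:
  assumes "\<And>k. min a b \<le> k \<Longrightarrow> k < max a b \<Longrightarrow> f k = g k"
  shows "ssum f a b = ssum g a b"
  unfolding ssum_def using assms by (intro arg_cong2[where f = minus] sum.cong) auto

definition antisym_form :: "(corner \<Rightarrow> corner \<Rightarrow> int) \<Rightarrow> bool" where
  "antisym_form w \<longleftrightarrow> (\<forall>a b. adjacent a b \<longrightarrow> w b a = - w a b)"

definition Phi :: "(corner \<Rightarrow> corner \<Rightarrow> int) \<Rightarrow> int \<Rightarrow> corner \<Rightarrow> int" where
  "Phi w x0 v = ssum (\<lambda>k. w (x0,k) (x0,k+1)) 0 (snd v) + ssum (\<lambda>k. w (k, snd v) (k+1, snd v)) x0 (fst v)"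

definition Acurl :: "(corner \<Rightarrow> corner \<Rightarrow> int) \<Rightarrow> int \<Rightarrow> corner \<Rightarrow> corner \<Rightarrow> int" where
  "Acurl w x0 a b = (if b = (fst a, snd a + 1) then ssum (\<lambda>k. curl w (k, snd a)) x0 (fst a)
      else if a = (fst b, snd b + 1) then - ssum (\<lambda>k. curl w (k, snd b)) x0 (fst b) else 0)"

lemma green_E: "w (x,y) (x+1,y) = Phi w x0 (x+1,y) - Phi w x0 (x,y) + Acurl w x0 (x,y) (x+1,y)"
  unfolding Phi_def Acurl_def by (simp add: ssum_succ)

lemma curl_rewrite:
  assumes "antisym_form w"
  shows "curl w (k,y) = w (k,y) (k+1,y) + w (k+1,y) (k+1,y+1) - w (k,y+1) (k+1,y+1) - w (k,y) (k,y+1)"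
proof -
  have a1: "adjacent (k,y+1) (k+1,y+1)" "adjacent (k,y) (k,y+1)" by (auto simp: adjacent_def)
  have "w (k+1,y+1) (k,y+1) = - w (k,y+1) (k+1,y+1)" "w (k,y+1) (k,y) = - w (k,y) (k,y+1)"
    using assms a1 unfolding antisym_form_def by blast+
  then show ?thesis unfolding curl_def by simp
qed

lemma green_N:
  assumes "antisym_form w"
  shows "w (x,y) (x,y+1) = Phi w x0 (x,y+1) - Phi w x0 (x,y) + Acurl w x0 (x,y) (x,y+1)"
proof -
  have "ssum (\<lambda>k. curl w (k, y)) x0 x =
     ssum (\<lambda>k. w (k,y) (k+1,y)) x0 x - ssum (\<lambda>k. w (k,y+1) (k+1,y+1)) x0 x
     + ssum (\<lambda>k. w (k+1,y) (k+1,y+1) - w (k,y) (k,y+1)) x0 x"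
    unfolding curl_rewrite[OF assms] ssum_add[symmetric] ssum_diff[symmetric]
    by (rule arg_cong[where f = "\<lambda>f. ssum f x0 x"]) (simp add: fun_eq_iff algebra_simps)
  also have "ssum (\<lambda>k. w (k+1,y) (k+1,y+1) - w (k,y) (k,y+1)) x0 x = w (x,y) (x,y+1) - w (x0,y) (x0,y+1)"
    using ssum_tele[of "\<lambda>k. w (k,y) (k,y+1)" x0 x] by simp
  finally show ?thesis unfolding Phi_def Acurl_def by (simp add: ssum_succ)
qed

lemma green_step:
  assumes w: "antisym_form w" and ab: "adjacent a b"
  shows "w a b = Phi w x0 b - Phi w x0 a + Acurl w x0 a b"
  using ab
proof (cases rule: adj_elim)
  case (1 x y) then show ?thesis using green_E by simp
next
  case (2 x y)
  have "w a b = - w b a" using w ab unfolding antisym_form_def by (metis adjacent_sym minus_minus)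
  moreover have "w b a = Phi w x0 a - Phi w x0 b + Acurl w x0 b a"
    using green_E[of w "x - 1" y x0] 2 by simp
  moreover have "Acurl w x0 a b = 0" "Acurl w x0 b a = 0" using 2 unfolding Acurl_def by auto
  ultimately show ?thesis by simp
next
  case (3 x y) then show ?thesis using green_N[OF w] by simp
next
  case (4 x y)
  have "w a b = - w b a" using w ab unfolding antisym_form_def by (metis adjacent_sym minus_minus)
  moreover have "w b a = Phi w x0 a - Phi w x0 b + Acurl w x0 b a"
    using green_N[OF w, of x "y - 1" x0] 4 by simp
  moreover have "Acurl w x0 a b = - Acurl w x0 b a" using 4 unfolding Acurl_def by auto
  ultimately show ?thesis by simp
qed

definition walk :: "(nat \<Rightarrow> corner) \<Rightarrow> nat \<Rightarrow> bool" where
  "walk p n \<longleftrightarrow> (\<forall>i<n. adjacent (p i) (p (Suc i)))"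

lemma green_closed:
  assumes w: "antisym_form w" and p: "walk p n" "p n = p 0"
  shows "(\<Sum>i<n. w (p i) (p (Suc i))) = (\<Sum>i<n. Acurl w x0 (p i) (p (Suc i)))"
proof -
  have "(\<Sum>i<n. w (p i) (p (Suc i))) = (\<Sum>i<n. (Phi w x0 (p (Suc i)) - Phi w x0 (p i)) + Acurl w x0 (p i) (p (Suc i)))"
    using green_step[OF w] p(1) unfolding walk_def by (intro sum.cong) auto
  also have "\<dots> = (\<Sum>i<n. Acurl w x0 (p i) (p (Suc i)))"
    using p(2) sum_lessThan_telescope[of "\<lambda>i. Phi w x0 (p i)" n] by (simp add: sum.distrib)
  finally show ?thesis .
qed

definition ind :: "int \<Rightarrow> int \<Rightarrow> int \<Rightarrow> int" where
  "ind x0 x k = (if x0 \<le> k \<and> k < x then 1 else if x \<le> k \<and> k < x0 then -1 else 0)"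

definition mu :: "int \<Rightarrow> square \<Rightarrow> corner \<Rightarrow> corner \<Rightarrow> int" where
  "mu x0 c a b = (if b = (fst a, snd a + 1) then (if snd c = snd a then ind x0 (fst a) (fst c) else 0)
     else if a = (fst b, snd b + 1) then (if snd c = snd b then - ind x0 (fst b) (fst c) else 0) else 0)"

definition Box :: "int \<Rightarrow> square set" where
  "Box B = {-B..<B} \<times> {-B..<B}"

lemma finite_Box[simp]: "finite (Box B)"
  unfolding Box_def by simp

lemma ssum_as_ind:
  assumes "\<bar>x0\<bar> \<le> B" "\<bar>x\<bar> \<le> B"
  shows "ssum g x0 x = (\<Sum>k\<in>{-B..<B}. ind x0 x k * g k)"
proof -
  have "(\<Sum>k\<in>{-B..<B}. ind x0 x k * g k) =
     (\<Sum>k\<in>{-B..<B}. (if k \<in> {x0..<x} then g k else 0) - (if k \<in> {x..<x0} then g k else 0))"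
    by (intro sum.cong) (auto simp: ind_def)
  also have "\<dots> = (\<Sum>k\<in>{-B..<B} \<inter> {x0..<x}. g k) - (\<Sum>k\<in>{-B..<B} \<inter> {x..<x0}. g k)"
    unfolding sum_subtractf by (simp only: sum.inter_restrict[OF finite_atLeastLessThan_int])
  also have "{-B..<B} \<inter> {x0..<x} = {x0..<x}" "{-B..<B} \<inter> {x..<x0} = {x..<x0}"
    using assms by auto
  then have "(\<Sum>k\<in>{-B..<B} \<inter> {x0..<x}. g k) - (\<Sum>k\<in>{-B..<B} \<inter> {x..<x0}. g k) = ssum g x0 x"
    unfolding ssum_def by simp
  finally show ?thesis by simp
qed

lemma Acurl_as_mu:
  assumes ab: "adjacent a b" and B: "\<bar>x0\<bar> \<le> B" "\<bar>fst a\<bar> \<le> B" "\<bar>snd a\<bar> \<le> B" "\<bar>fst b\<bar> \<le> B" "\<bar>snd b\<bar> \<le> B"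
  shows "Acurl w x0 a b = (\<Sum>c\<in>Box B. mu x0 c a b * curl w c)"
proof -
  have row: "(\<Sum>c\<in>Box B. (if snd c = y then ind x0 x (fst c) else 0) * curl w c) = ssum (\<lambda>k. curl w (k, y)) x0 x"
    if "\<bar>x\<bar> \<le> B" "-B \<le> y" "y < B" for x y
  proof -
    have "(\<Sum>c\<in>Box B. (if snd c = y then ind x0 x (fst c) else 0) * curl w c)
        = (\<Sum>k\<in>{-B..<B}. \<Sum>m\<in>{-B..<B}. (if m = y then ind x0 x k * curl w (k, m) else 0))"
      unfolding Box_def sum.cartesian_product by (intro sum.cong) auto
    also have "\<dots> = (\<Sum>k\<in>{-B..<B}. ind x0 x k * curl w (k, y))"
      using that by simp
    also have "\<dots> = ssum (\<lambda>k. curl w (k, y)) x0 x"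
      using ssum_as_ind[OF B(1) that(1)] by simp
    finally show ?thesis .
  qed
  show ?thesis using ab
  proof (cases rule: adj_elim)
    case (1 x y)
    then have "mu x0 c a b = 0" for c unfolding mu_def by auto
    moreover have "Acurl w x0 a b = 0" using 1 unfolding Acurl_def by auto
    ultimately show ?thesis by simp
  next
    case (2 x y)
    then have "mu x0 c a b = 0" for c unfolding mu_def by auto
    moreover have "Acurl w x0 a b = 0" using 2 unfolding Acurl_def by auto
    ultimately show ?thesis by simp
  next
    case (3 x y)
    then have "mu x0 c a b = (if snd c = y then ind x0 x (fst c) else 0)" for c unfolding mu_def by auto
    moreover have "Acurl w x0 a b = ssum (\<lambda>k. curl w (k, y)) x0 x" using 3 unfolding Acurl_def by auto
    ultimately show ?thesis using row[of x y] 3 B by simp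
  next
    case (4 x y)
    then have "mu x0 c a b = - (if snd c = y - 1 then ind x0 x (fst c) else 0)" for c unfolding mu_def by auto
    moreover have "Acurl w x0 a b = - ssum (\<lambda>k. curl w (k, y - 1)) x0 x" using 4 unfolding Acurl_def by auto
    ultimately show ?thesis using row[of x "y - 1"] 4 B by (simp add: sum_negf)
  qed
qed

definition nwind :: "int \<Rightarrow> (nat \<Rightarrow> corner) \<Rightarrow> nat \<Rightarrow> square \<Rightarrow> int" where
  "nwind x0 p n c = (\<Sum>i<n. mu x0 c (p i) (p (Suc i)))"

definition walk_bounded :: "int \<Rightarrow> (nat \<Rightarrow> corner) \<Rightarrow> nat \<Rightarrow> bool" where
  "walk_bounded B p n \<longleftrightarrow> (\<forall>i\<le>n. \<bar>fst (p i)\<bar> \<le> B \<and> \<bar>snd (p i)\<bar> \<le> B)"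

lemma green_wind:
  assumes w: "antisym_form w" and p: "walk p n" "p n = p 0"
    and B: "\<bar>x0\<bar> \<le> B" "walk_bounded B p n"
  shows "(\<Sum>i<n. w (p i) (p (Suc i))) = (\<Sum>c\<in>Box B. nwind x0 p n c * curl w c)"
proof -
  have "(\<Sum>i<n. w (p i) (p (Suc i))) = (\<Sum>i<n. Acurl w x0 (p i) (p (Suc i)))"
    by (rule green_closed[OF w p])
  also have "\<dots> = (\<Sum>i<n. \<Sum>c\<in>Box B. mu x0 c (p i) (p (Suc i)) * curl w c)"
  proof (intro sum.cong refl)
    fix i assume "i \<in> {..<n}"
    then show "Acurl w x0 (p i) (p (Suc i)) = (\<Sum>c\<in>Box B. mu x0 c (p i) (p (Suc i)) * curl w c)"
      using B p(1) unfolding walk_bounded_def walk_def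
      by (intro Acurl_as_mu) auto
  qed
  also have "\<dots> = (\<Sum>c\<in>Box B. nwind x0 p n c * curl w c)"
    unfolding nwind_def sum_distrib_right by (rule sum.swap)
  finally show ?thesis .
qed

lemma nwind_outside:
  assumes B: "\<bar>x0\<bar> \<le> B" "walk_bounded B p n" and p: "walk p n" and c: "c \<notin> Box B"
  shows "nwind x0 p n c = 0"
  unfolding nwind_def
proof (intro sum.neutral ballI)
  fix i assume i: "i \<in> {..<n}"
  have b: "\<bar>fst (p i)\<bar> \<le> B" "\<bar>snd (p i)\<bar> \<le> B" "\<bar>fst (p (Suc i))\<bar> \<le> B" "\<bar>snd (p (Suc i))\<bar> \<le> B"
    using B(2) i unfolding walk_bounded_def by auto
  show "mu x0 c (p i) (p (Suc i)) = 0"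
  proof (rule ccontr)
    assume nz: "mu x0 c (p i) (p (Suc i)) \<noteq> 0"
    have indnz: "ind x0 x k \<noteq> 0 \<Longrightarrow> \<bar>x\<bar> \<le> B \<Longrightarrow> -B \<le> k \<and> k < B" for x k
      using B(1) unfolding ind_def by (auto split: if_splits)
    consider "p (Suc i) = (fst (p i), snd (p i) + 1)" "snd c = snd (p i)" "ind x0 (fst (p i)) (fst c) \<noteq> 0"
      | "p i = (fst (p (Suc i)), snd (p (Suc i)) + 1)" "snd c = snd (p (Suc i))" "ind x0 (fst (p (Suc i))) (fst c) \<noteq> 0"
      using nz unfolding mu_def by (auto split: if_splits)
    then show False
    proof cases
      case 1
      then have "snd (p i) + 1 \<le> B" using b by (metis snd_conv abs_le_iff)
      then show False using 1 indnz[OF 1(3)] b c unfolding Box_def by (auto simp: abs_le_iff mem_Times_iff)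
    next
      case 2
      then have "snd (p (Suc i)) + 1 \<le> B" using b by (metis snd_conv abs_le_iff)
      then show False using 2 indnz[OF 2(3)] b c unfolding Box_def by (auto simp: abs_le_iff mem_Times_iff)
    qed
  qed
qed

definition iform :: "corner \<Rightarrow> corner \<Rightarrow> corner \<Rightarrow> corner \<Rightarrow> int" where
  "iform u v a b = (if a = u \<and> b = v then 1 else if a = v \<and> b = u then -1 else 0)"

lemma iform_antisym: "u \<noteq> v \<Longrightarrow> antisym_form (iform u v)"
  unfolding antisym_form_def iform_def by auto

lemma curl_iform_vert:
  "curl (iform (x+1,y) (x+1,y+1)) c = (if c = (x,y) then 1 else if c = (x+1,y) then -1 else 0)"
  by (cases c) (auto simp: curl_def iform_def)

lemma curl_iform_horiz:
  "curl (iform (x,y+1) (x+1,y+1)) c = (if c = (x,y+1) then 1 else if c = (x,y) then -1 else 0)"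
  by (cases c) (auto simp: curl_def iform_def)

definition corners :: "square \<Rightarrow> corner set" where
  "corners c = {(fst c, snd c), (fst c + 1, snd c), (fst c, snd c + 1), (fst c + 1, snd c + 1)}"

lemma walk_bounded_mono: "walk_bounded B p n \<Longrightarrow> B \<le> B' \<Longrightarrow> walk_bounded B' p n"
  unfolding walk_bounded_def by force

lemma sum_two_delta:
  assumes "c1 \<in> A" "c2 \<in> A" "c1 \<noteq> c2" "finite A"
  shows "(\<Sum>c\<in>A. f c * (if c = c1 then 1 else if c = c2 then -1 else 0)) = f c1 - (f c2 :: int)"
proof -
  have "(\<Sum>c\<in>A. f c * (if c = c1 then 1 else if c = c2 then -1 else 0))
      = (\<Sum>c\<in>A. (if c = c1 then f c else 0) - (if c = c2 then f c else 0))"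
    using assms(3) by (intro sum.cong) auto
  also have "\<dots> = f c1 - f c2" using assms by (simp add: sum_subtractf)
  finally show ?thesis .
qed

lemma iform_sum_zero:
  assumes "\<And>i. i < n \<Longrightarrow> p i \<noteq> u \<and> p (Suc i) \<noteq> u"
  shows "(\<Sum>i<n. iform u v (p i) (p (Suc i))) = 0"
  using assms by (intro sum.neutral) (auto simp: iform_def)

lemma nwind_step_h:
  assumes p: "walk p n" "p n = p 0" and B: "\<bar>x0\<bar> \<le> B" "walk_bounded B p n"
    and av: "\<And>i. i \<le> n \<Longrightarrow> p i \<noteq> (x+1,y)"
  shows "nwind x0 p n (x,y) = nwind x0 p n (x+1,y)"
proof -
  define B' where "B' = max B (\<bar>x\<bar> + \<bar>y\<bar> + 2)"
  have B': "\<bar>x0\<bar> \<le> B'" "walk_bounded B' p n" using B walk_bounded_mono[OF B(2)] unfolding B'_def by auto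
  have "0 = (\<Sum>i<n. iform (x+1,y) (x+1,y+1) (p i) (p (Suc i)))"
    using av by (intro iform_sum_zero[symmetric]) auto
  also have "\<dots> = (\<Sum>c\<in>Box B'. nwind x0 p n c * curl (iform (x+1,y) (x+1,y+1)) c)"
    by (rule green_wind[OF iform_antisym p B']) simp
  also have "\<dots> = nwind x0 p n (x,y) - nwind x0 p n (x+1,y)"
    unfolding curl_iform_vert
    by (rule sum_two_delta) (auto simp: Box_def B'_def)
  finally show ?thesis by simp
qed

lemma nwind_step_v:
  assumes p: "walk p n" "p n = p 0" and B: "\<bar>x0\<bar> \<le> B" "walk_bounded B p n"
    and av: "\<And>i. i \<le> n \<Longrightarrow> p i \<noteq> (x,y+1)"
  shows "nwind x0 p n (x,y+1) = nwind x0 p n (x,y)"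
proof -
  define B' where "B' = max B (\<bar>x\<bar> + \<bar>y\<bar> + 2)"
  have B': "\<bar>x0\<bar> \<le> B'" "walk_bounded B' p n" using B walk_bounded_mono[OF B(2)] unfolding B'_def by auto
  have "0 = (\<Sum>i<n. iform (x,y+1) (x+1,y+1) (p i) (p (Suc i)))"
    using av by (intro iform_sum_zero[symmetric]) auto
  also have "\<dots> = (\<Sum>c\<in>Box B'. nwind x0 p n c * curl (iform (x,y+1) (x+1,y+1)) c)"
    by (rule green_wind[OF iform_antisym p B']) simp
  also have "\<dots> = nwind x0 p n (x,y+1) - nwind x0 p n (x,y)"
    unfolding curl_iform_horiz
    by (rule sum_two_delta) (auto simp: Box_def B'_def)
  finally show ?thesis by simp
qed

lemma nwind_adjacent_cells:
  assumes p: "walk p n" "p n = p 0" and B: "\<bar>x0\<bar> \<le> B" "walk_bounded B p n"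
    and adj: "adjacent c1 c2"
    and av: "\<And>i. i \<le> n \<Longrightarrow> p i \<notin> corners c1"
  shows "nwind x0 p n c1 = nwind x0 p n c2"
  using adj
proof (cases rule: adj_elim)
  case (1 x y)
  show ?thesis using nwind_step_h[OF p B, of x y] av 1 unfolding corners_def by auto
next
  case (2 x y)
  show ?thesis using nwind_step_h[OF p B, of "x - 1" y] av 2 unfolding corners_def by auto
next
  case (3 x y)
  show ?thesis using nwind_step_v[OF p B, of x y] av 3 unfolding corners_def by auto
next
  case (4 x y)
  show ?thesis using nwind_step_v[OF p B, of x "y - 1"] av 4 unfolding corners_def by auto
qed

lemma nwind_chain:
  assumes p: "walk p n" "p n = p 0" and B: "\<bar>x0\<bar> \<le> B" "walk_bounded B p n"
    and av: "\<And>i c. i \<le> n \<Longrightarrow> c \<notin> R \<Longrightarrow> p i \<notin> corners c"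
    and ch: "(nadj R)\<^sup>*\<^sup>* c c'"
  shows "nwind x0 p n c = nwind x0 p n c'"
  using ch
proof (induct rule: rtranclp_induct)
  case base then show ?case by simp
next
  case (step y z)
  have "nwind x0 p n y = nwind x0 p n z"
    using step(2) nwind_adjacent_cells[OF p B, of y z] av unfolding nadj_def by blast
  then show ?case using step(3) by simp
qed


lemma nadj_sym: "nadj R a b \<Longrightarrow> nadj R b a"
  unfolding nadj_def using adjacent_sym by blast

lemma nadj_rtranclp_sym: "(nadj R)\<^sup>*\<^sup>* a b \<Longrightarrow> (nadj R)\<^sup>*\<^sup>* b a"
proof (induct rule: rtranclp_induct)
  case base then show ?case by simp
next
  case (step y z)
  then show ?case using nadj_sym by (metis converse_rtranclp_into_rtranclp)
qed

lemma hpath_nat: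
  "(\<forall>k. a \<le> k \<and> k \<le> a + int m \<longrightarrow> (k,y) \<notin> R) \<Longrightarrow> (nadj R)\<^sup>*\<^sup>* (a,y) (a + int m, y)"
proof (induct m)
  case 0 then show ?case by simp
next
  case (Suc m)
  then have ih: "(nadj R)\<^sup>*\<^sup>* (a,y) (a + int m, y)" by simp
  have "nadj R (a + int m, y) (a + int (Suc m), y)"
    using Suc(2) unfolding nadj_def adjacent_def by auto
  then show ?case using ih by (simp add: rtranclp.rtrancl_into_rtrancl)
qed

lemma hpath:
  assumes "\<And>k. min a b \<le> k \<Longrightarrow> k \<le> max a b \<Longrightarrow> (k,y) \<notin> R"
  shows "(nadj R)\<^sup>*\<^sup>* (a,y) (b,y)"
proof (cases "a \<le> b")
  case True
  then show ?thesis using hpath_nat[of a "nat (b - a)" y R] assms by auto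
next
  case False
  then have "(nadj R)\<^sup>*\<^sup>* (b,y) (a,y)" using hpath_nat[of b "nat (a - b)" y R] assms by auto
  then show ?thesis by (rule nadj_rtranclp_sym)
qed

lemma vpath_nat:
  "(\<forall>k. a \<le> k \<and> k \<le> a + int m \<longrightarrow> (x,k) \<notin> R) \<Longrightarrow> (nadj R)\<^sup>*\<^sup>* (x,a) (x, a + int m)"
proof (induct m)
  case 0 then show ?case by simp
next
  case (Suc m)
  then have ih: "(nadj R)\<^sup>*\<^sup>* (x,a) (x, a + int m)" by simp
  have "nadj R (x, a + int m) (x, a + int (Suc m))"
    using Suc(2) unfolding nadj_def adjacent_def by auto
  then show ?case using ih by (simp add: rtranclp.rtrancl_into_rtrancl)
qed

lemma vpath:
  assumes "\<And>k. min a b \<le> k \<Longrightarrow> k \<le> max a b \<Longrightarrow> (x,k) \<notin> R"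
  shows "(nadj R)\<^sup>*\<^sup>* (x,a) (x,b)"
proof (cases "a \<le> b")
  case True
  then show ?thesis using vpath_nat[of a "nat (b - a)" x R] assms by auto
next
  case False
  then have "(nadj R)\<^sup>*\<^sup>* (x,b) (x,a)" using vpath_nat[of b "nat (a - b)" x R] assms by auto
  then show ?thesis by (rule nadj_rtranclp_sym)
qed

definition bnd :: "square set \<Rightarrow> int" where
  "bnd R = Max (insert 0 ((\<lambda>c. max \<bar>fst c\<bar> \<bar>snd c\<bar>) ` R))"

lemma bnd: "finite R \<Longrightarrow> c \<in> R \<Longrightarrow> \<bar>fst c\<bar> \<le> bnd R \<and> \<bar>snd c\<bar> \<le> bnd R"
  unfolding bnd_def by (metis (no_types, lifting) Max_ge finite_imageI finite_insert image_eqI insertCI max.bounded_iff)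

lemma bnd_nonneg: "finite R \<Longrightarrow> 0 \<le> bnd R"
  unfolding bnd_def by (simp add: Max_ge)

lemma reach_left:
  assumes sc: "simply_connected_region R" and c: "c \<notin> R"
  shows "\<exists>c'. (nadj R)\<^sup>*\<^sup>* c c' \<and> fst c' < K"
proof -
  have fin: "finite R" using sc simply_connected_region_def by blast
  define B0 where "B0 = bnd R"
  have out: "\<And>q. \<bar>fst q\<bar> > B0 \<or> \<bar>snd q\<bar> > B0 \<Longrightarrow> q \<notin> R"
    using bnd[OF fin] unfolding B0_def by force
  define B' where "B' = B0 + \<bar>K\<bar> + 1"
  obtain c1 where c1: "(nadj R)\<^sup>*\<^sup>* c c1" "\<bar>fst c1\<bar> > B' \<or> \<bar>snd c1\<bar> > B'"
    using nonR_component_unbounded[OF sc c, of B'] by blast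
  have B0: "0 \<le> B0" using bnd_nonneg[OF fin] unfolding B0_def .
  obtain a b where ab: "c1 = (a,b)" by fastforce
  show ?thesis
  proof (cases "\<bar>b\<bar> > B0")
    case True
    have "(nadj R)\<^sup>*\<^sup>* (a,b) (K - 1, b)"
      by (rule hpath) (use out True in auto)
    then show ?thesis using c1(1) ab by (intro exI[of _ "(K - 1, b)"]) auto
  next
    case False
    then have ab': "\<bar>a\<bar> > B'" using c1(2) ab B'_def by auto
    show ?thesis
    proof (cases "a < 0")
      case True
      then have "a < K" using ab' B'_def B0 by auto
      then show ?thesis using c1 ab by auto
    next
      case False
      then have agt: "a > B0" using ab' B'_def B0 by auto
      have "(nadj R)\<^sup>*\<^sup>* (a,b) (a, B0 + 1)"
      proof (rule vpath)
        fix k have "B0 < \<bar>a\<bar>" using agt by simp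
        then show "(a, k) \<notin> R" using out[of "(a,k)"] by simp
      qed
      moreover have "(nadj R)\<^sup>*\<^sup>* (a, B0+1) (K - 1, B0 + 1)"
      proof (rule hpath)
        fix k have "B0 < \<bar>B0 + 1\<bar>" using B0 by simp
        then show "(k, B0 + 1) \<notin> R" using out[of "(k,B0+1)"] by simp
      qed
      ultimately show ?thesis using c1(1) ab by (intro exI[of _ "(K - 1, B0 + 1)"]) auto
    qed
  qed
qed

lemma lft_steps:
  "lft (x,y) (x+1,y) = (x,y)" "lft (x,y) (x,y+1) = (x-1,y)"
  "lft (x,y) (x-1,y) = (x-1,y-1)" "lft (x,y) (x,y-1) = (x,y-1)"
  by (auto simp: lft_def)

lemma rgt_steps:
  "rgt (x,y) (x+1,y) = (x,y-1)" "rgt (x,y) (x,y+1) = (x,y)"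
  "rgt (x,y) (x-1,y) = (x-1,y)" "rgt (x,y) (x,y-1) = (x-1,y-1)"
  by (auto simp: lft_def rgt_def)

definition delta :: "edge set \<Rightarrow> edge set \<Rightarrow> corner \<Rightarrow> corner \<Rightarrow> int" where
  "delta T1 T2 a b = omega T1 a b - omega T2 a b"

definition dH :: "square set \<Rightarrow> edge set \<Rightarrow> edge set \<Rightarrow> corner \<Rightarrow> int" where
  "dH R T1 T2 v = Phi (delta T1 T2) (- bnd R) v"

lemma omega_out:
  assumes "is_tiling R T" "lft a b \<notin> R \<or> rgt a b \<notin> R"
  shows "omega T a b = sigma (lft a b)"
proof -
  have "{lft a b, rgt a b} \<notin> T" using assms tiling_edge_in_R by blast
  then show ?thesis unfolding omega_def by simp
qed

lemma delta_out:
  assumes "is_tiling R T1" "is_tiling R T2" "lft a b \<notin> R \<or> rgt a b \<notin> R"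
  shows "delta T1 T2 a b = 0"
  unfolding delta_def using omega_out[OF assms(1,3)] omega_out[OF assms(2,3)] by simp

lemma delta_antisym: "antisym_form (delta T1 T2)"
  unfolding antisym_form_def delta_def using omega_antisym by simp

lemma curl_diff: "curl (\<lambda>a b. f a b - g a b) c = curl f c - curl g c"
  unfolding curl_def by simp

lemma curl_delta_zero:
  assumes T1: "is_tiling R T1" and T2: "is_tiling R T2"
  shows "curl (delta T1 T2) c = 0"
proof (cases "c \<in> R")
  case True
  have "curl (delta T1 T2) c = curl (omega T1) c - curl (omega T2) c"
    unfolding delta_def[abs_def] by (rule curl_diff)
  then show ?thesis using curl_omega_R[OF T1 True] curl_omega_R[OF T2 True] by simp
next
  case False
  obtain x y where c: "c = (x,y)" by fastforce
  have "delta T1 T2 (x, y) (x + 1, y) = 0" "delta T1 T2 (x + 1, y) (x + 1, y + 1) = 0"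
     "delta T1 T2 (x + 1, y + 1) (x, y + 1) = 0" "delta T1 T2 (x, y + 1) (x, y) = 0"
    using False c by (auto intro!: delta_out[OF T1 T2] simp: lft_ccw)
  then show ?thesis unfolding curl_def c by simp
qed

lemma dH_exact:
  assumes T1: "is_tiling R T1" and T2: "is_tiling R T2" and ab: "adjacent a b"
  shows "dH R T1 T2 b - dH R T1 T2 a = delta T1 T2 a b"
proof -
  have "Acurl (delta T1 T2) (- bnd R) a b = 0"
    unfolding Acurl_def using curl_delta_zero[OF T1 T2] by (simp add: ssum_zero)
  then show ?thesis using green_step[OF delta_antisym ab, of T1 T2 "- bnd R"] unfolding dH_def by simp
qed

lemma dH_left:
  assumes fin: "finite R" and T1: "is_tiling R T1" and T2: "is_tiling R T2" and v: "fst v \<le> - bnd R"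
  shows "dH R T1 T2 v = 0"
proof -
  have out: "q \<notin> R" if "fst q < - bnd R" for q using bnd[OF fin, of q] that by auto
  have "ssum (\<lambda>k. delta T1 T2 (- bnd R, k) (- bnd R, k + 1)) 0 (snd v) = 0"
    by (rule ssum_zero, rule delta_out[OF T1 T2]) (simp add: lft_steps out)
  moreover have "ssum (\<lambda>k. delta T1 T2 (k, snd v) (k + 1, snd v)) (- bnd R) (fst v) =
      ssum (\<lambda>k. 0) (- bnd R) (fst v)"
    by (rule ssum_cong_range, rule delta_out[OF T1 T2], rule disjI1) (use v in \<open>auto simp: lft_steps intro!: out\<close>)
  ultimately show ?thesis unfolding dH_def Phi_def by (simp add: ssum_zero)
qed

lemma delta_dvd: "4 dvd delta T1 T2 a b"
  unfolding delta_def omega_def sigma_def by auto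

lemma dH_dvd: "4 dvd dH R T1 T2 v"
  unfolding dH_def Phi_def by (intro dvd_add ssum_dvd delta_dvd)

lemma dH_cell_const:
  assumes T1: "is_tiling R T1" and T2: "is_tiling R T2" and c: "c \<notin> R" and v: "v \<in> corners c"
  shows "dH R T1 T2 v = dH R T1 T2 (fst c, snd c)"
proof -
  obtain x y where cxy: "c = (x,y)" by fastforce
  let ?d = "dH R T1 T2"
  have "?d (x+1,y) - ?d (x,y) = 0"
    using dH_exact[OF T1 T2, of "(x,y)" "(x+1,y)"] delta_out[OF T1 T2, of "(x,y)" "(x+1,y)"] c cxy
    by (simp add: adjacent_def lft_steps)
  moreover have "?d (x+1,y+1) - ?d (x+1,y) = 0"
    using dH_exact[OF T1 T2, of "(x+1,y)" "(x+1,y+1)"] delta_out[OF T1 T2, of "(x+1,y)" "(x+1,y+1)"] c cxy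
    by (simp add: adjacent_def lft_steps)
  moreover have "?d (x,y) - ?d (x,y+1) = 0"
    using dH_exact[OF T1 T2, of "(x,y+1)" "(x,y)"] delta_out[OF T1 T2, of "(x,y+1)" "(x,y)"] c cxy
    by (simp add: adjacent_def lft_ccw)
  ultimately show ?thesis using v cxy unfolding corners_def by auto
qed

lemma shared_corner:
  assumes "adjacent c c'"
  shows "(max (fst c) (fst c'), max (snd c) (snd c')) \<in> corners c \<inter> corners c'"
  using assms by (rule adj_elim) (auto simp: corners_def)

lemma nonR_corner_zero:
  assumes sc: "simply_connected_region R" and T1: "is_tiling R T1" and T2: "is_tiling R T2"
    and c: "c \<notin> R" and v: "v \<in> corners c"
  shows "dH R T1 T2 v = 0"
proof -
  have fin: "finite R" using sc simply_connected_region_def by blast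
  let ?cv = "\<lambda>c. dH R T1 T2 (fst c, snd c)"
  obtain c' where c': "(nadj R)\<^sup>*\<^sup>* c c'" "fst c' < - bnd R"
    using reach_left[OF sc c] by blast
  have "?cv c' = ?cv c" using c'(1)
  proof (induct rule: rtranclp_induct)
    case base then show ?case by simp
  next
    case (step y z)
    have nz: "y \<notin> R" "z \<notin> R" "adjacent y z" using step(2) unfolding nadj_def by auto
    have "?cv y = ?cv z"
      using shared_corner[OF nz(3)] dH_cell_const[OF T1 T2 nz(1)] dH_cell_const[OF T1 T2 nz(2)] by force
    then show ?case using step(3) by simp
  qed
  moreover have "?cv c' = 0" using dH_left[OF fin T1 T2] c'(2) by simp
  ultimately show ?thesis using dH_cell_const[OF T1 T2 c v] by simp
qed

lemma dH_nonzero_interior: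
  assumes sc: "simply_connected_region R" and T1: "is_tiling R T1" and T2: "is_tiling R T2"
    and nz: "dH R T1 T2 (i,j) \<noteq> 0"
  shows "(i-1,j-1) \<in> R" "(i,j-1) \<in> R" "(i-1,j) \<in> R" "(i,j) \<in> R"
proof -
  have "(i,j) \<in> corners (i-1,j-1)" "(i,j) \<in> corners (i,j-1)" "(i,j) \<in> corners (i-1,j)" "(i,j) \<in> corners (i,j)"
    unfolding corners_def by auto
  then show "(i-1,j-1) \<in> R" "(i,j-1) \<in> R" "(i-1,j) \<in> R" "(i,j) \<in> R"
    using nonR_corner_zero[OF sc T1 T2] nz by blast+
qed

lemma dH_swap: "dH R T2 T1 v = - dH R T1 T2 v"
proof -
  have "delta T2 T1 = (\<lambda>a b. - delta T1 T2 a b)" unfolding delta_def by (simp add: fun_eq_iff)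
  then show ?thesis unfolding dH_def Phi_def by (simp add: ssum_uminus)
qed

lemma tiling_unique:
  assumes T: "is_tiling R T" and e: "e1 \<in> T" "e2 \<in> T" "p \<in> e1" "p \<in> e2"
  shows "e1 = e2"
proof -
  have "e1 \<in> grid_edges R" using T e unfolding is_tiling_def by blast
  then have "p \<in> R" using e(3) unfolding grid_edges_def by blast
  then have "\<exists>!e. e \<in> T \<and> p \<in> e" using T unfolding is_tiling_def by blast
  then show ?thesis using e by blast
qed

definition blk :: "int \<Rightarrow> int \<Rightarrow> square set" where
  "blk a b = {(a,b),(a+1,b),(a,b+1),(a+1,b+1)}"

lemma hdom_vdom_disj: "hdom a b \<inter> vdom a b = {}"
  unfolding hdom_def vdom_def by (auto simp: doubleton_eq_iff)

lemma flip_cases: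
  assumes "flip_move T D1 D2"
  obtains a b where "D1 = hdom a b" "D2 = vdom a b" "D1 \<subseteq> T" | a b where "D1 = vdom a b" "D2 = hdom a b" "D1 \<subseteq> T"
  using assms unfolding flip_move_def by blast

lemma flip_disjoint:
  assumes T: "is_tiling R T" and f: "flip_move T D1 D2"
  shows "D2 \<inter> T = {}" "D1 \<inter> D2 = {}"
proof -
  show "D2 \<inter> T = {}"
  proof (rule flip_cases[OF f])
    fix a b assume D: "D1 = hdom a b" "D2 = vdom a b" "D1 \<subseteq> T"
    have h1: "{(a, b), (a + 1, b)} \<in> T" "{(a, b + 1), (a + 1, b + 1)} \<in> T" using D unfolding hdom_def by auto
    have "{(a, b), (a, b + 1)} \<notin> T"
    proof
      assume "{(a, b), (a, b + 1)} \<in> T"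
      then have "{(a, b), (a, b + 1)} = {(a, b), (a + 1, b)}" using tiling_unique[OF T _ h1(1)] by blast
      then show False by (auto simp: doubleton_eq_iff)
    qed
    moreover have "{(a + 1, b), (a + 1, b + 1)} \<notin> T"
    proof
      assume "{(a + 1, b), (a + 1, b + 1)} \<in> T"
      then have "{(a + 1, b), (a + 1, b + 1)} = {(a, b), (a + 1, b)}" using tiling_unique[OF T _ h1(1)] by blast
      then show False by (auto simp: doubleton_eq_iff)
    qed
    ultimately show ?thesis using D unfolding vdom_def by auto
  next
    fix a b assume D: "D1 = vdom a b" "D2 = hdom a b" "D1 \<subseteq> T"
    have h1: "{(a, b), (a, b + 1)} \<in> T" "{(a + 1, b), (a + 1, b + 1)} \<in> T" using D unfolding vdom_def by auto
    have "{(a, b), (a + 1, b)} \<notin> T"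
    proof
      assume "{(a, b), (a + 1, b)} \<in> T"
      then have "{(a, b), (a + 1, b)} = {(a, b), (a, b + 1)}" using tiling_unique[OF T _ h1(1)] by blast
      then show False by (auto simp: doubleton_eq_iff)
    qed
    moreover have "{(a, b + 1), (a + 1, b + 1)} \<notin> T"
    proof
      assume "{(a, b + 1), (a + 1, b + 1)} \<in> T"
      then have "{(a, b + 1), (a + 1, b + 1)} = {(a, b), (a, b + 1)}" using tiling_unique[OF T _ h1(1)] by blast
      then show False by (auto simp: doubleton_eq_iff)
    qed
    ultimately show ?thesis using D unfolding hdom_def by auto
  qed
  show "D1 \<inter> D2 = {}"
    by (rule flip_cases[OF f]) (use hdom_vdom_disj in auto)
qed

lemma dom_cells: "e \<in> hdom a b \<union> vdom a b \<Longrightarrow> e \<subseteq> blk a b"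
  unfolding hdom_def vdom_def blk_def by auto

lemma blk_cover_h: "p \<in> blk a b \<Longrightarrow> \<exists>!e. e \<in> hdom a b \<and> p \<in> e"
  unfolding hdom_def blk_def by (auto simp: doubleton_eq_iff)

lemma blk_cover_v: "p \<in> blk a b \<Longrightarrow> \<exists>!e. e \<in> vdom a b \<and> p \<in> e"
  unfolding vdom_def blk_def by (auto simp: doubleton_eq_iff)

lemma flip_tiling:
  assumes T: "is_tiling R T" and f: "flip_move T D1 D2"
  shows "is_tiling R ((T - D1) \<union> D2)"
proof -
  obtain a b where ab: "(D1 = hdom a b \<and> D2 = vdom a b) \<or> (D1 = vdom a b \<and> D2 = hdom a b)" "D1 \<subseteq> T"
    using f unfolding flip_move_def by blast
  have D12: "D1 \<union> D2 = hdom a b \<union> vdom a b" using ab by auto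
  have blkR: "blk a b \<subseteq> R"
    using ab(1)
  proof
    assume "D1 = hdom a b \<and> D2 = vdom a b"
    then have "{(a, b), (a + 1, b)} \<in> T" "{(a, b + 1), (a + 1, b + 1)} \<in> T"
      using ab(2) unfolding hdom_def by auto
    then show ?thesis using tiling_edge_in_R[OF T] unfolding blk_def by blast
  next
    assume "D1 = vdom a b \<and> D2 = hdom a b"
    then have "{(a, b), (a, b + 1)} \<in> T" "{(a + 1, b), (a + 1, b + 1)} \<in> T"
      using ab(2) unfolding vdom_def by auto
    then show ?thesis using tiling_edge_in_R[OF T] unfolding blk_def by blast
  qed
  have gI: "{p,q} \<in> grid_edges R" if "p \<in> R" "q \<in> R" "adjacent p q" for p q
    using that unfolding grid_edges_def by blast
  have cover2: "\<exists>!e. e \<in> D2 \<and> p \<in> e" if "p \<in> blk a b" for p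
    using ab(1) blk_cover_h[OF that] blk_cover_v[OF that] by auto
  have cover1: "\<exists>!e. e \<in> D1 \<and> p \<in> e" if "p \<in> blk a b" for p
    using ab(1) blk_cover_h[OF that] blk_cover_v[OF that] by auto
  have D2grid: "D2 \<subseteq> grid_edges R"
  proof
    fix e assume "e \<in> D2"
    then have "e \<in> hdom a b \<union> vdom a b" using ab(1) by blast
    then show "e \<in> grid_edges R"
      unfolding hdom_def vdom_def using blkR unfolding blk_def
      by (auto intro!: gI simp: adjacent_def)
  qed
  have "(T - D1) \<union> D2 \<subseteq> grid_edges R" using T D2grid unfolding is_tiling_def by blast
  moreover have "\<exists>!e. e \<in> (T - D1) \<union> D2 \<and> p \<in> e" if p: "p \<in> R" for p
  proof (cases "p \<in> blk a b")
    case True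
    have "e \<notin> T - D1" if "e \<in> T" "p \<in> e" for e
    proof -
      obtain e1 where e1: "e1 \<in> D1" "p \<in> e1" using cover1[OF True] by blast
      then have "e = e1" using tiling_unique[OF T that(1) _ that(2)] ab(2) by blast
      then show ?thesis using e1 by blast
    qed
    then show ?thesis using cover2[OF True] by blast
  next
    case False
    obtain e where e: "e \<in> T" "p \<in> e" "\<And>e'. e' \<in> T \<Longrightarrow> p \<in> e' \<Longrightarrow> e' = e"
      using T p unfolding is_tiling_def by blast
    have "e \<notin> D1" using e(2) False dom_cells D12 by blast
    moreover have "e' \<notin> D2" if "p \<in> e'" for e' using that False dom_cells D12 by blast
    ultimately show ?thesis using e by blast
  qed
  ultimately show ?thesis unfolding is_tiling_def by blast
qed

lemma omega_pos_delta:
  assumes "omega T1 a b > 0" "delta T1 T2 a b \<le> 0"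
  shows "delta T1 T2 a b = 0"
  using assms unfolding delta_def omega_def sigma_def by (auto split: if_splits)

lemma omega_toggle:
  assumes "omega T a b \<le> 0" "{lft a b, rgt a b} \<in> T' \<longleftrightarrow> {lft a b, rgt a b} \<notin> T"
  shows "omega T' a b = omega T a b + 4"
  using assms unfolding omega_def sigma_def by (auto split: if_splits)

lemma step_pair_block:
  assumes ab: "adjacent a b" and P: "{lft a b, rgt a b} \<in> hdom (i-1) (j-1) \<union> vdom (i-1) (j-1)"
  shows "a = (i,j) \<or> b = (i,j)"
  using ab
proof (cases rule: adj_elim)
  case (1 x y) then show ?thesis using P by (auto simp: lft_steps rgt_steps hdom_def vdom_def doubleton_eq_iff)
next
  case (2 x y) then show ?thesis using P by (auto simp: lft_steps rgt_steps hdom_def vdom_def doubleton_eq_iff)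
next
  case (3 x y) then show ?thesis using P by (auto simp: lft_steps rgt_steps hdom_def vdom_def doubleton_eq_iff)
next
  case (4 x y) then show ?thesis using P by (auto simp: lft_steps rgt_steps hdom_def vdom_def doubleton_eq_iff)
qed

lemma out_pair_block:
  assumes ab: "adjacent (i,j) b"
  shows "{lft (i,j) b, rgt (i,j) b} \<in> hdom (i-1) (j-1) \<union> vdom (i-1) (j-1)"
  using ab
proof (cases rule: adj_elim)
  case (1 x y) then show ?thesis by (auto simp: lft_steps rgt_steps hdom_def vdom_def doubleton_eq_iff)
next
  case (2 x y) then show ?thesis by (auto simp: lft_steps rgt_steps hdom_def vdom_def doubleton_eq_iff)
next
  case (3 x y) then show ?thesis by (auto simp: lft_steps rgt_steps hdom_def vdom_def doubleton_eq_iff)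
next
  case (4 x y) then show ?thesis by (auto simp: lft_steps rgt_steps hdom_def vdom_def doubleton_eq_iff)
qed

lemma omega_flip:
  assumes T: "is_tiling R T" and f: "flip_move T D1 D2"
    and D: "D1 \<union> D2 = hdom (i-1) (j-1) \<union> vdom (i-1) (j-1)"
    and neg: "\<And>w. adjacent (i,j) w \<Longrightarrow> omega T (i,j) w \<le> 0"
    and ab: "adjacent a b"
  shows "omega ((T - D1) \<union> D2) a b = omega T a b + (if a = (i,j) then 4 else 0) - (if b = (i,j) then 4 else 0)"
proof -
  let ?T' = "(T - D1) \<union> D2"
  have D1T: "D1 \<subseteq> T" using f unfolding flip_move_def by blast
  note disj = flip_disjoint[OF T f]
  have tog: "P \<in> ?T' \<longleftrightarrow> P \<notin> T" if "P \<in> D1 \<union> D2" for P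
    using that D1T disj by blast
  have same: "P \<in> ?T' \<longleftrightarrow> P \<in> T" if "P \<notin> D1 \<union> D2" for P
    using that by blast
  have outv: "omega ?T' (i,j) w = omega T (i,j) w + 4" if "adjacent (i,j) w" for w
    by (rule omega_toggle[OF neg[OF that]]) (use tog out_pair_block[OF that] D in blast)
  have ab_ne: "a \<noteq> b" using ab by (auto simp: adjacent_def)
  show ?thesis
  proof (cases "a = (i,j)")
    case True
    then show ?thesis using outv ab ab_ne by auto
  next
    case False
    note aF = False
    show ?thesis
    proof (cases "b = (i,j)")
      case True
      have ba: "adjacent (i,j) a" using ab True adjacent_sym by blast
      have "omega ?T' a b = - omega ?T' b a" using omega_antisym[OF adjacent_sym[OF ab]] by simp
      also have "\<dots> = - (omega T b a + 4)" using outv[OF ba] True by simp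
      also have "\<dots> = omega T a b - 4" using omega_antisym[OF adjacent_sym[OF ab], of T] by simp
      finally show ?thesis using True aF by simp
    next
      case False
      have "{lft a b, rgt a b} \<notin> D1 \<union> D2" using step_pair_block[OF ab] aF False D by blast
      then have "omega ?T' a b = omega T a b" unfolding omega_def using same by simp
      then show ?thesis using aF False by simp
    qed
  qed
qed

lemma const_on_grid:
  assumes h: "\<And>a b. adjacent a b \<Longrightarrow> h b = (h a :: int)"
  shows "h u = h u0"
proof -
  have hx: "h (x, y) = h (x0, y)" for x x0 y
  proof (induct x rule: int_induct[where k = x0])
    case base then show ?case by simp
  next
    case (step1 i) then show ?case using h[of "(i,y)" "(i+1,y)"] by (simp add: adjacent_def)
  next
    case (step2 i) then show ?case using h[of "(i,y)" "(i-1,y)"] by (simp add: adjacent_def)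
  qed
  have hy: "h (x, y) = h (x, y0)" for x y y0
  proof (induct y rule: int_induct[where k = y0])
    case base then show ?case by simp
  next
    case (step1 i) then show ?case using h[of "(x,i)" "(x,i+1)"] by (simp add: adjacent_def)
  next
    case (step2 i) then show ?case using h[of "(x,i)" "(x,i-1)"] by (simp add: adjacent_def)
  qed
  show ?thesis using hx hy by (metis prod.collapse)
qed

lemma pot_unique:
  assumes "\<And>a b. adjacent a b \<Longrightarrow> f b - f a = g b - (g a :: int)"
  shows "f u - g u = f u0 - g u0"
proof (rule const_on_grid[of "\<lambda>u. f u - g u"])
  fix a b assume "adjacent a b"
  then have "f b - f a = g b - g a" by (rule assms)
  then show "f b - g b = f a - g a" by simp
qed

lemma find_cycle:
  assumes fin: "finite S" and v0: "v0 \<in> S"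
    and nx: "\<And>v. v \<in> S \<Longrightarrow> nx v \<in> S \<and> P v (nx v)"
  shows "\<exists>q n. n > 0 \<and> q n = q 0 \<and> (\<forall>k<n. P (q k) (q (Suc k))) \<and> (\<forall>k\<le>n. q k \<in> S)"
proof -
  define p where "p i = (nx ^^ i) v0" for i
  have pS: "p i \<in> S" for i by (induct i) (auto simp: p_def nx v0)
  have pS2: "p (Suc i) = nx (p i)" for i by (simp add: p_def)
  have "p ` {..card S} \<subseteq> S" using pS by auto
  then have "card (p ` {..card S}) \<le> card S" using fin by (simp add: card_mono)
  then have "\<not> inj_on p {..card S}" by (metis Suc_n_not_le_n card_atMost card_image)
  then obtain i j where ij: "i \<le> card S" "j \<le> card S" "i \<noteq> j" "p i = p j"
    unfolding inj_on_def by blast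
  obtain i' j' where ij': "i' < j'" "p i' = p j'"
    using ij by (metis linorder_neqE_nat)
  define q where "q k = p (i' + k)" for k
  show ?thesis
  proof (intro exI[of _ q] exI[of _ "j' - i'"] conjI allI impI)
    show "0 < j' - i'" using ij' by simp
    show "q (j' - i') = q 0" using ij' by (simp add: q_def)
    fix k assume "k < j' - i'"
    show "P (q k) (q (Suc k))" using nx[OF pS] pS2 unfolding q_def by (metis add_Suc_right)
  next
    fix k show "q k \<in> S" using pS unfolding q_def by blast
  qed
qed

definition CB :: "square set \<Rightarrow> corner set" where
  "CB R = {-bnd R - 1 .. bnd R + 1} \<times> {-bnd R - 1 .. bnd R + 1}"

definition meas :: "square set \<Rightarrow> edge set \<Rightarrow> edge set \<Rightarrow> int" where
  "meas R T1 T2 = (\<Sum>u\<in>CB R. \<bar>dH R T1 T2 u\<bar>)"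

lemma finite_CB[simp]: "finite (CB R)" unfolding CB_def by simp

lemma dH_nz_CB:
  assumes sc: "simply_connected_region R" and T1: "is_tiling R T1" and T2: "is_tiling R T2"
    and nz: "dH R T1 T2 v \<noteq> 0"
  shows "v \<in> CB R"
proof -
  have fin: "finite R" using sc simply_connected_region_def by blast
  obtain i j where v: "v = (i,j)" by fastforce
  have "(i-1,j-1) \<in> R" "(i,j) \<in> R" using dH_nonzero_interior[OF sc T1 T2] nz v by auto
  then have "\<bar>i-1\<bar> \<le> bnd R" "\<bar>j-1\<bar> \<le> bnd R" "\<bar>i\<bar> \<le> bnd R" "\<bar>j\<bar> \<le> bnd R"
    using bnd[OF fin] by force+
  then show ?thesis unfolding CB_def v by auto
qed

lemma no_pos_cycle:
  assumes sc: "simply_connected_region R" and T1: "is_tiling R T1" and T2: "is_tiling R T2"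
    and M: "M \<noteq> 0"
    and q: "walk q n" "q n = q 0" "\<And>k. k \<le> n \<Longrightarrow> dH R T1 T2 (q k) = M"
    and qb: "walk_bounded (bnd R + 2) q n"
  shows "(\<Sum>k<n. omega T1 (q k) (q (Suc k))) = 0"
proof -
  define B where "B = bnd R + 2"
  have fin: "finite R" using sc simply_connected_region_def by blast
  have B0: "\<bar>0::int\<bar> \<le> B" using bnd_nonneg[OF fin] unfolding B_def by simp
  have qb': "walk_bounded B q n" using qb unfolding B_def .
  have anti: "antisym_form (omega T1)" unfolding antisym_form_def using omega_antisym by blast
  have "(\<Sum>k<n. omega T1 (q k) (q (Suc k))) = (\<Sum>c\<in>Box B. nwind 0 q n c * curl (omega T1) c)"
    by (rule green_wind[OF anti q(1,2) B0 qb'])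
  also have "\<dots> = 0"
  proof (intro sum.neutral ballI)
    fix c assume "c \<in> Box B"
    show "nwind 0 q n c * curl (omega T1) c = 0"
    proof (cases "c \<in> R")
      case True then show ?thesis using curl_omega_R[OF T1] by simp
    next
      case False
      obtain c' where c': "(nadj R)\<^sup>*\<^sup>* c c'" "fst c' < - B" using reach_left[OF sc False] by blast
      have av: "q i \<notin> corners c0" if "i \<le> n" "c0 \<notin> R" for i c0
      proof
        assume "q i \<in> corners c0"
        then have "dH R T1 T2 (q i) = 0" by (rule nonR_corner_zero[OF sc T1 T2 that(2)])
        then show False using q(3)[OF that(1)] M by simp
      qed
      have "nwind 0 q n c = nwind 0 q n c'"
        by (rule nwind_chain[OF q(1,2) B0 qb' av c'(1)])
      also have "\<dots> = 0"
        by (rule nwind_outside[OF B0 qb' q(1)]) (use c'(2) in \<open>auto simp: Box_def\<close>)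
      finally show ?thesis by simp
    qed
  qed
  finally show ?thesis .
qed

lemma flip_step:
  assumes sc: "simply_connected_region R" and T1: "is_tiling R T1" and T2: "is_tiling R T2"
    and v0: "dH R T1 T2 v0 > 0"
  shows "\<exists>D1 D2. flip_move T1 D1 D2 \<and> meas R ((T1 - D1) \<union> D2) T2 < meas R T1 T2"
proof -
  have fin: "finite R" using sc simply_connected_region_def by blast
  define d where "d = dH R T1 T2"
  have v0CB: "v0 \<in> CB R" using v0 by (intro dH_nz_CB[OF sc T1 T2]) simp
  define M where "M = Max (d ` CB R)"
  have dle: "d u \<le> M" for u
  proof (cases "u \<in> CB R")
    case True then show ?thesis unfolding M_def by simp
  next
    case False
    then have "d u = 0" using dH_nz_CB[OF sc T1 T2] unfolding d_def by blast
    moreover have "d v0 \<le> M" using v0CB unfolding M_def by simp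
    ultimately show ?thesis using v0 unfolding d_def by simp
  qed
  have Mpos: "M > 0" using dle[of v0] v0 unfolding d_def by simp
  define S where "S = {u \<in> CB R. d u = M}"
  have finS: "finite S" unfolding S_def by simp
  have MS: "\<exists>u\<in>S. True"
  proof -
    have "M \<in> d ` CB R" unfolding M_def using v0CB by (intro Max_in) auto
    then show ?thesis unfolding S_def by auto
  qed
  have inS: "u \<in> S" if "d u = M" for u
    using that Mpos dH_nz_CB[OF sc T1 T2, of u] unfolding S_def d_def by auto
  have ex: "\<exists>v\<in>S. \<forall>w. adjacent v w \<longrightarrow> omega T1 v w \<le> 0"
  proof (rule ccontr)
    assume "\<not> ?thesis"
    then have all: "\<And>v. v \<in> S \<Longrightarrow> \<exists>w. adjacent v w \<and> omega T1 v w > 0" by force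
    define nx where "nx v = (SOME w. adjacent v w \<and> omega T1 v w > 0)" for v
    have nx1: "adjacent v (nx v) \<and> omega T1 v (nx v) > 0" if "v \<in> S" for v
      unfolding nx_def using someI_ex[OF all[OF that]] .
    have nx2: "nx v \<in> S" if v: "v \<in> S" for v
    proof -
      have "d (nx v) - d v = delta T1 T2 v (nx v)"
        unfolding d_def by (rule dH_exact[OF T1 T2]) (use nx1[OF v] in blast)
      moreover have "d v = M" using v unfolding S_def by simp
      ultimately have "delta T1 T2 v (nx v) \<le> 0" using dle[of "nx v"] by simp
      then have "delta T1 T2 v (nx v) = 0" using omega_pos_delta nx1[OF v] by blast
      then have "d (nx v) = M" using \<open>d (nx v) - d v = _\<close> \<open>d v = M\<close> by simp
      then show ?thesis by (rule inS)
    qed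
    obtain v1 where v1: "v1 \<in> S" using MS by blast
    obtain q n where qn: "n > 0" "q n = q 0" "\<forall>k<n. adjacent (q k) (q (Suc k)) \<and> omega T1 (q k) (q (Suc k)) > 0"
      "\<forall>k\<le>n. q k \<in> S"
      using find_cycle[OF finS v1, of nx "\<lambda>a b. adjacent a b \<and> omega T1 a b > 0"] nx1 nx2 by blast
    have w: "walk q n" using qn(3) unfolding walk_def by blast
    have qM: "dH R T1 T2 (q k) = M" if "k \<le> n" for k using qn(4) that unfolding S_def d_def by auto
    have qb: "walk_bounded (bnd R + 2) q n"
      unfolding walk_bounded_def
    proof (intro allI impI)
      fix k assume "k \<le> n"
      then have "q k \<in> CB R" using qn(4) unfolding S_def by auto
      then show "\<bar>fst (q k)\<bar> \<le> bnd R + 2 \<and> \<bar>snd (q k)\<bar> \<le> bnd R + 2" unfolding CB_def by auto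
    qed
    have "(\<Sum>k<n. omega T1 (q k) (q (Suc k))) = 0"
      by (rule no_pos_cycle[OF sc T1 T2 _ w qn(2) qM qb]) (use Mpos in simp)
    moreover have "(\<Sum>k<n. omega T1 (q k) (q (Suc k))) > 0"
      using qn(1,3) by (intro sum_pos) auto
    ultimately show False by simp
  qed
  then obtain i j where vS: "(i,j) \<in> S" and neg: "\<And>w. adjacent (i,j) w \<Longrightarrow> omega T1 (i,j) w \<le> 0"
    by (metis surj_pair)
  have dv: "d (i,j) = M" using vS unfolding S_def by simp
  have cells: "(i-1,j-1) \<in> R" "(i,j-1) \<in> R" "(i-1,j) \<in> R" "(i,j) \<in> R"
    using dH_nonzero_interior[OF sc T1 T2, of i j] dv Mpos unfolding d_def by auto
  have nE: "omega T1 (i,j) (i+1,j) \<le> 0" and nN: "omega T1 (i,j) (i,j+1) \<le> 0"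
    and nW: "omega T1 (i,j) (i-1,j) \<le> 0" and nS: "omega T1 (i,j) (i,j-1) \<le> 0"
    using neg by (auto simp: adjacent_def)
  obtain D1 D2 where f: "flip_move T1 D1 D2" and D: "D1 \<union> D2 = hdom (i-1) (j-1) \<union> vdom (i-1) (j-1)"
  proof (cases "even (i + j)")
    case True
    have "{(i,j),(i,j-1)} \<in> T1" using nE True unfolding omega_def sigma_def
      by (simp add: lft_steps rgt_steps split: if_splits)
    moreover have "{(i-1,j-1),(i-1,j)} \<in> T1" using nW True unfolding omega_def sigma_def
      by (simp add: lft_steps rgt_steps split: if_splits)
    ultimately have "vdom (i-1) (j-1) \<subseteq> T1" unfolding vdom_def by (auto simp: insert_commute)
    then have "flip_move T1 (vdom (i-1) (j-1)) (hdom (i-1) (j-1))" unfolding flip_move_def by blast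
    then show ?thesis using that by blast
  next
    case False
    have "{(i-1,j),(i,j)} \<in> T1" using nN False unfolding omega_def sigma_def
      by (simp add: lft_steps rgt_steps split: if_splits)
    moreover have "{(i,j-1),(i-1,j-1)} \<in> T1" using nS False unfolding omega_def sigma_def
      by (simp add: lft_steps rgt_steps split: if_splits)
    ultimately have "hdom (i-1) (j-1) \<subseteq> T1" unfolding hdom_def by (auto simp: insert_commute)
    then have "flip_move T1 (hdom (i-1) (j-1)) (vdom (i-1) (j-1))" unfolding flip_move_def by blast
    then show ?thesis using that by blast
  qed
  define T1' where "T1' = (T1 - D1) \<union> D2"
  have T1': "is_tiling R T1'" unfolding T1'_def by (rule flip_tiling[OF T1 f])
  define g where "g u = d u - (if u = (i,j) then 4 else 0)" for u
  have pot: "dH R T1' T2 b - dH R T1' T2 a = g b - g a" if ab: "adjacent a b" for a b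
  proof -
    have "dH R T1' T2 b - dH R T1' T2 a = delta T1' T2 a b" by (rule dH_exact[OF T1' T2 ab])
    also have "\<dots> = delta T1 T2 a b + (if a = (i,j) then 4 else 0) - (if b = (i,j) then 4 else 0)"
    proof -
      have om: "omega T1' a b = omega T1 a b + (if a = (i,j) then 4 else 0) - (if b = (i,j) then 4 else 0)"
        unfolding T1'_def by (rule omega_flip[OF T1 f D neg ab])
      show ?thesis unfolding delta_def om by simp
    qed
    also have "\<dots> = g b - g a" unfolding g_def d_def dH_exact[OF T1 T2 ab, symmetric] by simp
    finally show ?thesis .
  qed
  define u0 where "u0 = (- bnd R, 0::int)"
  have u0v: "u0 \<noteq> (i,j)" using bnd[OF fin cells(1)] unfolding u0_def by auto
  have "dH R T1' T2 u0 = 0" "d u0 = 0" using dH_left[OF fin T1' T2] dH_left[OF fin T1 T2] unfolding u0_def d_def by auto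
  then have gu0: "dH R T1' T2 u0 - g u0 = 0" unfolding g_def using u0v by simp
  have d': "dH R T1' T2 u = g u" for u using pot_unique[of "dH R T1' T2" g u u0] pot gu0 by simp
  have M4: "M \<ge> 4"
  proof -
    have "4 dvd M" using dH_dvd[of R T1 T2 "(i,j)"] dv unfolding d_def by simp
    then show ?thesis using Mpos by (auto elim!: dvdE)
  qed
  have vCB: "(i,j) \<in> CB R" using vS unfolding S_def by simp
  have "meas R T1' T2 = (\<Sum>u\<in>CB R. \<bar>g u\<bar>)" unfolding meas_def d' ..
  also have "\<dots> = \<bar>g (i,j)\<bar> + (\<Sum>u\<in>CB R - {(i,j)}. \<bar>g u\<bar>)"
    using vCB by (simp add: sum.remove)
  also have "(\<Sum>u\<in>CB R - {(i,j)}. \<bar>g u\<bar>) = (\<Sum>u\<in>CB R - {(i,j)}. \<bar>d u\<bar>)"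
    unfolding g_def by (intro sum.cong) auto
  also have "\<bar>g (i,j)\<bar> = \<bar>d (i,j)\<bar> - 4" unfolding g_def using dv M4 by simp
  also have "\<bar>d (i,j)\<bar> - 4 + (\<Sum>u\<in>CB R - {(i,j)}. \<bar>d u\<bar>) = meas R T1 T2 - 4"
    using vCB unfolding meas_def d_def by (simp add: sum.remove)
  finally have "meas R T1' T2 < meas R T1 T2" by simp
  then show ?thesis using f unfolding T1'_def by blast
qed

lemma step_of_pair:
  assumes "adjacent p q"
  shows "\<exists>a b. adjacent a b \<and> lft a b = p \<and> rgt a b = q"
  using assms
proof (cases rule: adj_elim)
  case (1 x y)
  then show ?thesis using lft_steps(2)[of "x+1" y] rgt_steps(2)[of "x+1" y]
    by (intro exI[of _ "(x+1,y)"] exI[of _ "(x+1,y+1)"]) (auto simp: adjacent_def)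
next
  case (2 x y)
  then show ?thesis using lft_steps(4)[of x "y+1"] rgt_steps(4)[of x "y+1"]
    by (intro exI[of _ "(x,y+1)"] exI[of _ "(x,y)"]) (auto simp: adjacent_def)
next
  case (3 x y)
  then show ?thesis using lft_steps(3)[of "x+1" "y+1"] rgt_steps(3)[of "x+1" "y+1"]
    by (intro exI[of _ "(x+1,y+1)"] exI[of _ "(x,y+1)"]) (auto simp: adjacent_def)
next
  case (4 x y)
  then show ?thesis using lft_steps(1)[of x y] rgt_steps(1)[of x y]
    by (intro exI[of _ "(x,y)"] exI[of _ "(x+1,y)"]) (auto simp: adjacent_def)
qed

lemma diff_tilings_dH:
  assumes T1: "is_tiling R T1" and T2: "is_tiling R T2" and e: "e \<in> T1" "e \<notin> T2"
  shows "\<exists>v. dH R T1 T2 v \<noteq> 0"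
proof -
  have "e \<in> grid_edges R" using T1 e unfolding is_tiling_def by blast
  then obtain p q where pq: "e = {p,q}" "adjacent p q" unfolding grid_edges_def by blast
  obtain a b where ab: "adjacent a b" "lft a b = p" "rgt a b = q" using step_of_pair[OF pq(2)] by blast
  have "delta T1 T2 a b \<noteq> 0" using e pq ab unfolding delta_def omega_def sigma_def by auto
  then have "dH R T1 T2 b - dH R T1 T2 a \<noteq> 0" using dH_exact[OF T1 T2 ab(1)] by simp
  then have "dH R T1 T2 b \<noteq> 0 \<or> dH R T1 T2 a \<noteq> 0" by auto
  then show ?thesis by blast
qed

definition cons_seq :: "edge set \<Rightarrow> (nat \<Rightarrow> edge set) \<Rightarrow> nat \<Rightarrow> edge set" where
  "cons_seq A f k = (if k \<le> 1 then A else f (k - 1))"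

lemma flip_seq_cons:
  "flip_seq T (cons_seq A D1) (cons_seq B D2) (Suc i) = flip_seq ((T - A) \<union> B) D1 D2 i"
  by (induct i) (auto simp: cons_seq_def)

lemma valid_flips_cons:
  assumes "flip_move T A B" "valid_flips ((T - A) \<union> B) D1 D2 s"
  shows "valid_flips T (cons_seq A D1) (cons_seq B D2) (Suc s)"
  unfolding valid_flips_def
proof
  fix i assume i: "i \<in> {1..Suc s}"
  show "flip_move (flip_seq T (cons_seq A D1) (cons_seq B D2) (i - 1)) (cons_seq A D1 i) (cons_seq B D2 i)"
  proof (cases "i = 1")
    case True then show ?thesis using assms(1) by (simp add: cons_seq_def)
  next
    case False
    then have "i \<ge> 2" using i by auto
    define k where "k = i - 2"
    have k: "i = Suc (Suc k)" using \<open>i \<ge> 2\<close> unfolding k_def by simp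
    have "Suc k \<in> {1..s}" using i k by auto
    then have "flip_move (flip_seq ((T - A) \<union> B) D1 D2 (Suc k - 1)) (D1 (Suc k)) (D2 (Suc k))"
      using assms(2) unfolding valid_flips_def by blast
    moreover have "flip_seq T (cons_seq A D1) (cons_seq B D2) (i - 1) = flip_seq ((T - A) \<union> B) D1 D2 k"
      by (simp only: k diff_Suc_1 flip_seq_cons)
    moreover have "cons_seq A D1 i = D1 (Suc k)" "cons_seq B D2 i = D2 (Suc k)" by (simp_all add: cons_seq_def k)
    ultimately show ?thesis by simp
  qed
qed

lemma meas_sym: "meas R T1 T2 = meas R T2 T1"
  unfolding meas_def by (simp add: dH_swap[of R T1 T2])

lemma meas_nonneg: "meas R T1 T2 \<ge> 0"
  unfolding meas_def by (simp add: sum_nonneg)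

lemma reach_common:
  assumes sc: "simply_connected_region R"
  shows "is_tiling R T1 \<Longrightarrow> is_tiling R T2 \<Longrightarrow>
    \<exists>s D1 D2 t D1' D2'. valid_flips T1 D1 D2 s \<and> valid_flips T2 D1' D2' t \<and>
       flip_seq T1 D1 D2 s = flip_seq T2 D1' D2' t"
proof (induct "nat (meas R T1 T2)" arbitrary: T1 T2 rule: less_induct)
  case less
  note T1 = less(2) and T2 = less(3)
  show ?case
  proof (cases "T1 = T2")
    case True
    have "valid_flips T1 D D 0" "valid_flips T2 D D 0" "flip_seq T1 D D 0 = flip_seq T2 D D 0" for D
      using True by (auto simp: valid_flips_def)
    then show ?thesis by blast
  next
    case False
    then obtain e where "(e \<in> T1 \<and> e \<notin> T2) \<or> (e \<in> T2 \<and> e \<notin> T1)" by blast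
    then obtain v where v: "dH R T1 T2 v \<noteq> 0"
    proof
      assume "e \<in> T1 \<and> e \<notin> T2"
      then show ?thesis using diff_tilings_dH[OF T1 T2] that by blast
    next
      assume "e \<in> T2 \<and> e \<notin> T1"
      then obtain v where "dH R T2 T1 v \<noteq> 0" using diff_tilings_dH[OF T2 T1] by blast
      then have "dH R T1 T2 v \<noteq> 0" by (simp add: dH_swap[of R T1 T2])
      then show ?thesis using that by blast
    qed
    show ?thesis
    proof (cases "dH R T1 T2 v > 0")
      case True
      obtain A B where f: "flip_move T1 A B" and lt: "meas R ((T1 - A) \<union> B) T2 < meas R T1 T2"
        using flip_step[OF sc T1 T2 True] by blast
      have T1': "is_tiling R ((T1 - A) \<union> B)" by (rule flip_tiling[OF T1 f])
      have "nat (meas R ((T1 - A) \<union> B) T2) < nat (meas R T1 T2)"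
        using lt meas_nonneg[of R "(T1 - A) \<union> B" T2] by simp
      from less(1)[OF this T1' T2] obtain s D1 D2 t D1' D2' where
        IH: "valid_flips ((T1 - A) \<union> B) D1 D2 s" "valid_flips T2 D1' D2' t"
          "flip_seq ((T1 - A) \<union> B) D1 D2 s = flip_seq T2 D1' D2' t" by blast
      have "flip_seq T1 (cons_seq A D1) (cons_seq B D2) (Suc s) = flip_seq ((T1 - A) \<union> B) D1 D2 s"
        by (rule flip_seq_cons)
      then show ?thesis using IH valid_flips_cons[OF f IH(1)] by metis
    next
      case False
      then have "dH R T1 T2 v < 0" using v by simp
      then have pos: "dH R T2 T1 v > 0" by (simp add: dH_swap[of R T1 T2])
      obtain A B where f: "flip_move T2 A B" and lt: "meas R ((T2 - A) \<union> B) T1 < meas R T2 T1"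
        using flip_step[OF sc T2 T1 pos] by blast
      have T2': "is_tiling R ((T2 - A) \<union> B)" by (rule flip_tiling[OF T2 f])
      have "nat (meas R T1 ((T2 - A) \<union> B)) < nat (meas R T1 T2)"
        using lt meas_nonneg[of R T1 "(T2 - A) \<union> B"] meas_sym[of R T1] meas_sym[of R T1 T2] by simp
      from less(1)[OF this T1 T2'] obtain s D1 D2 t D1' D2' where
        IH: "valid_flips T1 D1 D2 s" "valid_flips ((T2 - A) \<union> B) D1' D2' t"
          "flip_seq T1 D1 D2 s = flip_seq ((T2 - A) \<union> B) D1' D2' t" by blast
      have "flip_seq T2 (cons_seq A D1') (cons_seq B D2') (Suc t) = flip_seq ((T2 - A) \<union> B) D1' D2' t"
        by (rule flip_seq_cons)
      then show ?thesis using IH valid_flips_cons[OF f IH(2)] by metis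
    qed
  qed
qed

lemma valid_flips_tiling:
  assumes T: "is_tiling R T" and v: "valid_flips T D1 D2 s" and i: "i \<le> s"
  shows "is_tiling R (flip_seq T D1 D2 i)"
  using i
proof (induct i)
  case 0 then show ?case using T by simp
next
  case (Suc i)
  have "Suc i \<in> {1..s}" using Suc(2) by simp
  then have "flip_move (flip_seq T D1 D2 (Suc i - 1)) (D1 (Suc i)) (D2 (Suc i))"
    using v unfolding valid_flips_def by blast
  then show ?case using flip_tiling Suc by simp
qed

lemma same_tiling_contractible:
  assumes T: "is_tiling R T" and V: "V \<in> union_cycles R T T"
  shows "contractible_cycle R (T \<union> T) V"
proof -
  obtain p where p: "p \<in> R" "V = comp_of T p" using V unfolding union_cycles_def by auto
  obtain q where q: "{p,q} \<in> T" "adjacent p q" "\<And>e. e \<in> T \<Longrightarrow> p \<in> e \<Longrightarrow> e = {p,q}"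
    using tiling_partner[OF T p(1)] by blast
  have Vsub: "V \<subseteq> {p,q}"
  proof
    fix x assume "x \<in> V"
    then have "(\<lambda>a b. {a, b} \<in> T)\<^sup>*\<^sup>* p x" using p unfolding comp_of_def by simp
    then show "x \<in> {p,q}"
    proof (induct rule: rtranclp_induct)
      case base then show ?case by simp
    next
      case (step y z)
      have "{y,z} = {p,q}" using tiling_unique[OF T step(2) q(1)] step(3) by blast
      then show ?case by auto
    qed
  qed
  define S where "S = closed_segment (center p) (center q)"
  have each: "X = S" if X: "X \<in> {closed_segment (center a) (center b) | a b. {a, b} \<in> T \<union> T \<and> a \<in> V \<and> b \<in> V}" for X
  proof -
    obtain a b where ab: "X = closed_segment (center a) (center b)" "{a,b} \<in> T" "a \<in> V" "b \<in> V"
      using X by blast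
    have "a \<noteq> b" using tiling_edge_in_R[OF T ab(2)] by (auto simp: adjacent_def)
    then have "(a = p \<and> b = q) \<or> (a = q \<and> b = p)" using ab Vsub by auto
    then show ?thesis using ab(1) unfolding S_def by (auto simp: closed_segment_commute)
  qed
  have "drawing (T \<union> T) V = S \<or> drawing (T \<union> T) V = {}"
    unfolding drawing_def using each by blast
  then have "convex (drawing (T \<union> T) V)" unfolding S_def by auto
  then have "cycle_interior (T \<union> T) V = {}" unfolding cycle_interior_def by (rule inside_convex)
  then show ?thesis unfolding contractible_cycle_def by simp
qed

lemma finite_grid_edges: "finite R \<Longrightarrow> finite (grid_edges R)"
proof -
  assume fin: "finite R"
  have "grid_edges R \<subseteq> (\<lambda>(p,q). {p,q}) ` (R \<times> R)" unfolding grid_edges_def by auto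
  then show ?thesis using fin by (meson finite_SigmaI finite_imageI finite_subset)
qed

lemma tiling_finite: "finite R \<Longrightarrow> is_tiling R T \<Longrightarrow> finite T"
  unfolding is_tiling_def using finite_grid_edges finite_subset by blast

lemma flip_move_finite: "flip_move T D1 D2 \<Longrightarrow> finite D1 \<and> finite D2"
  unfolding flip_move_def hdom_def vdom_def by auto

lemma ymon_flip:
  assumes fin: "finite R" and T: "is_tiling R Q" and f: "flip_move Q A B"
  shows "(ymon Q :: 'k::field epoly) - ymon ((Q - A) \<union> B) = ymon (Q - A) * (ymon A - ymon B)"
proof -
  have fQ: "finite Q" by (rule tiling_finite[OF fin T])
  have fAB: "finite A" "finite B" using flip_move_finite[OF f] by auto
  have AQ: "A \<subseteq> Q" using f unfolding flip_move_def by blast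
  have dis: "(Q - A) \<inter> B = {}" using flip_disjoint(1)[OF T f] by blast
  have "(ymon Q :: 'k epoly) = ymon (Q - A) * ymon A"
    unfolding ymon_def by (rule prod.subset_diff[OF AQ fQ])
  moreover have "(ymon ((Q - A) \<union> B) :: 'k epoly) = ymon (Q - A) * ymon B"
    unfolding ymon_def using fQ fAB dis by (simp add: prod.union_disjoint)
  ultimately show ?thesis by (simp add: right_diff_distrib)
qed

lemma tele_1s:
  fixes f :: "nat \<Rightarrow> 'a::ab_group_add" and s :: nat
  shows "(\<Sum>i=1..s. (f (i - 1) - f i)) = f 0 - f s"
proof -
  have "(\<Sum>i=1..s. f (i - 1) - f i) = (\<Sum>k<s. f k - f (Suc k))"
    using sum.atLeast1_atMost_eq[of "\<lambda>i. f (i - 1) - f i" s] by simp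
  also have "\<dots> = f 0 - f s" by (rule sum_lessThan_telescope')
  finally show ?thesis .
qed

lemma sum_flips:
  assumes fin: "finite R" and T: "is_tiling R T" and v: "valid_flips T D1 D2 s"
  shows "(\<Sum>i=1..s. (ymon (flip_seq T D1 D2 (i - 1) - D1 i) :: 'k::field epoly) * (ymon (D1 i) - ymon (D2 i)))
     = ymon T - ymon (flip_seq T D1 D2 s)"
proof -
  have "(\<Sum>i=1..s. (ymon (flip_seq T D1 D2 (i - 1) - D1 i) :: 'k::field epoly) * (ymon (D1 i) - ymon (D2 i)))
      = (\<Sum>i=1..s. ymon (flip_seq T D1 D2 (i - 1)) - ymon (flip_seq T D1 D2 i))"
  proof (intro sum.cong refl)
    fix i assume i: "i \<in> {1..s}"
    then have f: "flip_move (flip_seq T D1 D2 (i - 1)) (D1 i) (D2 i)" using v unfolding valid_flips_def by blast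
    have "i - 1 \<le> s" using i by (meson atLeastAtMost_iff diff_le_self le_trans)
    then have Ti: "is_tiling R (flip_seq T D1 D2 (i - 1))" by (rule valid_flips_tiling[OF T v])
    have "flip_seq T D1 D2 i = (flip_seq T D1 D2 (i - 1) - D1 i) \<union> D2 i"
      using i by (cases i) auto
    then show "(ymon (flip_seq T D1 D2 (i - 1) - D1 i) :: 'k epoly) * (ymon (D1 i) - ymon (D2 i))
        = ymon (flip_seq T D1 D2 (i - 1)) - ymon (flip_seq T D1 D2 i)"
      using ymon_flip[OF fin Ti f, where 'k = 'k] by simp
  qed
  also have "\<dots> = ymon (flip_seq T D1 D2 0) - ymon (flip_seq T D1 D2 s)"
    by (rule tele_1s)
  finally show ?thesis by simp
qed

definition mono2 :: "edge \<Rightarrow> edge \<Rightarrow> (edge \<Rightarrow>\<^sub>0 nat)" where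
  "mono2 e1 e2 = Poly_Mapping.single e1 1 + Poly_Mapping.single e2 1"

lemma ymon_two: "e1 \<noteq> e2 \<Longrightarrow> (ymon {e1,e2} :: 'k::field epoly) = Poly_Mapping.single (mono2 e1 e2) 1"
  unfolding ymon_def yvar_def mono2_def by (simp add: mult_single)

lemma lookup_mono2: "e1 \<noteq> e2 \<Longrightarrow> Poly_Mapping.lookup (mono2 e1 e2) e = (if e = e1 \<or> e = e2 then 1 else 0)"
  unfolding mono2_def by (auto simp: lookup_add lookup_single when_def)

lemma mon_degree_mono2: "e1 \<noteq> e2 \<Longrightarrow> mon_degree (mono2 e1 e2) = 2"
proof -
  assume ne: "e1 \<noteq> e2"
  have k: "Poly_Mapping.keys (mono2 e1 e2) = {e1, e2}"
    using lookup_mono2[OF ne] by (auto simp: in_keys_iff split: if_splits)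
  show ?thesis unfolding mon_degree_def k using ne by (simp add: lookup_mono2)
qed

lemma has_degree_two:
  assumes ne: "e1 \<noteq> e2" "f1 \<noteq> f2" and dis: "e1 \<notin> {f1,f2}"
  shows "has_degree (ymon {e1,e2} - ymon {f1,f2} :: 'k::field epoly) 2"
proof -
  define m1 where "m1 = mono2 e1 e2"
  define m2 where "m2 = mono2 f1 f2"
  have m12: "m1 \<noteq> m2"
  proof
    assume "m1 = m2"
    then have "Poly_Mapping.lookup m1 e1 = Poly_Mapping.lookup m2 e1" by simp
    then show False using lookup_mono2[OF ne(1), of e1] lookup_mono2[OF ne(2), of e1] dis
      unfolding m1_def m2_def by simp
  qed
  have eq: "(ymon {e1,e2} - ymon {f1,f2} :: 'k epoly) = Poly_Mapping.single m1 1 - Poly_Mapping.single m2 1"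
    unfolding m1_def m2_def using ymon_two ne by metis
  have nz: "Poly_Mapping.single m1 (1::'k) - Poly_Mapping.single m2 1 \<noteq> 0"
  proof
    assume "Poly_Mapping.single m1 (1::'k) - Poly_Mapping.single m2 1 = 0"
    then have "Poly_Mapping.lookup (Poly_Mapping.single m1 (1::'k) - Poly_Mapping.single m2 1) m1 = 0" by simp
    then show False using m12 by (simp add: lookup_minus lookup_single_not_eq)
  qed
  have keys: "m \<in> {m1, m2}" if "m \<in> Poly_Mapping.keys (Poly_Mapping.single m1 (1::'k) - Poly_Mapping.single m2 1)" for m
  proof (rule ccontr)
    assume "m \<notin> {m1, m2}"
    then have "Poly_Mapping.lookup (Poly_Mapping.single m1 (1::'k) - Poly_Mapping.single m2 1) m = 0"
      by (auto simp: lookup_minus lookup_single when_def)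
    then show False using that by (simp add: in_keys_iff)
  qed
  show ?thesis unfolding has_degree_def eq
    using nz keys mon_degree_mono2[OF ne(1)] mon_degree_mono2[OF ne(2)] unfolding m1_def m2_def by blast
qed

lemma flip_degree:
  assumes "flip_move T D1 D2"
  shows "has_degree (ymon D1 - ymon D2 :: 'k::field epoly) 2" "has_degree (ymon D2 - ymon D1 :: 'k::field epoly) 2"
proof -
  have hv: "has_degree (ymon (hdom a b) - ymon (vdom a b) :: 'k::field epoly) 2"
       "has_degree (ymon (vdom a b) - ymon (hdom a b) :: 'k::field epoly) 2" for a b
    unfolding hdom_def vdom_def by (rule has_degree_two; auto simp: doubleton_eq_iff)+
  show "has_degree (ymon D1 - ymon D2 :: 'k::field epoly) 2" "has_degree (ymon D2 - ymon D1 :: 'k::field epoly) 2"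
    using assms hv unfolding flip_move_def by auto
qed

theorem mainTheorem9:
  fixes R :: "square set" and T1 T2 :: "edge set"
  assumes "simply_connected_region R"
    and "is_tiling R T1" and "is_tiling R T2"
    and "\<forall>V\<in>union_cycles R T1 T2. perimeter_cycle R T1 T2 V"
  shows "\<exists>s D1 D2 t D1' D2'.
     valid_flips T1 D1 D2 s \<and> valid_flips T2 D1' D2' t \<and>
     is_tiling R (flip_seq T1 D1 D2 s) \<and> is_tiling R (flip_seq T2 D1' D2' t) \<and>
     (\<forall>V\<in>union_cycles R (flip_seq T1 D1 D2 s) (flip_seq T2 D1' D2' t).
        contractible_cycle R (flip_seq T1 D1 D2 s \<union> flip_seq T2 D1' D2' t) V) \<and>
     (Bpoly T1 T2 :: 'k::field epoly) =
        (\<Sum>i=1..s. ymon (flip_seq T1 D1 D2 (i - 1) - D1 i) * (ymon (D1 i) - ymon (D2 i)))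
        + Bpoly (flip_seq T1 D1 D2 s) (flip_seq T2 D1' D2' t)
        + (\<Sum>j=1..t. ymon (flip_seq T2 D1' D2' (j - 1) - D1' j) * (ymon (D2' j) - ymon (D1' j))) \<and>
     (\<forall>i\<in>{1..s}. has_degree (ymon (D1 i) - ymon (D2 i) :: 'k epoly) 2) \<and>
     (\<forall>j\<in>{1..t}. has_degree (ymon (D2' j) - ymon (D1' j) :: 'k epoly) 2)"
proof -
  note sc = assms(1) and T1 = assms(2) and T2 = assms(3)
  have fin: "finite R" using sc simply_connected_region_def by blast
  obtain s D1 D2 t D1' D2' where v1: "valid_flips T1 D1 D2 s" and v2: "valid_flips T2 D1' D2' t"
    and eq: "flip_seq T1 D1 D2 s = flip_seq T2 D1' D2' t"
    using reach_common[OF sc T1 T2] by blast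
  define T' where "T' = flip_seq T1 D1 D2 s"
  have eq': "flip_seq T2 D1' D2' t = T'" using eq unfolding T'_def by simp
  have T': "is_tiling R T'" unfolding T'_def using valid_flips_tiling[OF T1 v1] by simp
  have c: "\<forall>V\<in>union_cycles R T' T'. contractible_cycle R (T' \<union> T') V"
    using same_tiling_contractible[OF T'] by blast
  have s1: "(\<Sum>i=1..s. (ymon (flip_seq T1 D1 D2 (i - 1) - D1 i) :: 'k epoly) * (ymon (D1 i) - ymon (D2 i)))
      = ymon T1 - ymon T'" unfolding T'_def by (rule sum_flips[OF fin T1 v1])
  have s2': "(\<Sum>j=1..t. (ymon (flip_seq T2 D1' D2' (j - 1) - D1' j) :: 'k epoly) * (ymon (D1' j) - ymon (D2' j)))
      = ymon T2 - ymon T'" using sum_flips[OF fin T2 v2] eq' by simp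
  have s2: "(\<Sum>j=1..t. (ymon (flip_seq T2 D1' D2' (j - 1) - D1' j) :: 'k epoly) * (ymon (D2' j) - ymon (D1' j)))
      = ymon T' - ymon T2"
  proof -
    have "(\<Sum>j=1..t. (ymon (flip_seq T2 D1' D2' (j - 1) - D1' j) :: 'k epoly) * (ymon (D2' j) - ymon (D1' j)))
       = - (\<Sum>j=1..t. (ymon (flip_seq T2 D1' D2' (j - 1) - D1' j) :: 'k epoly) * (ymon (D1' j) - ymon (D2' j)))"
      by (simp add: sum_negf[symmetric] right_diff_distrib)
    then show ?thesis using s2' by simp
  qed
  have poly: "(Bpoly T1 T2 :: 'k epoly) =
        (\<Sum>i=1..s. ymon (flip_seq T1 D1 D2 (i - 1) - D1 i) * (ymon (D1 i) - ymon (D2 i)))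
        + Bpoly T' T'
        + (\<Sum>j=1..t. ymon (flip_seq T2 D1' D2' (j - 1) - D1' j) * (ymon (D2' j) - ymon (D1' j)))"
    unfolding s1 s2 Bpoly_def by simp
  have d1: "\<forall>i\<in>{1..s}. has_degree (ymon (D1 i) - ymon (D2 i) :: 'k epoly) 2"
    using v1 flip_degree(1) unfolding valid_flips_def by blast
  have d2: "\<forall>j\<in>{1..t}. has_degree (ymon (D2' j) - ymon (D1' j) :: 'k epoly) 2"
    using v2 flip_degree(2) unfolding valid_flips_def by blast
  show ?thesis
    apply (rule exI[where x = s], rule exI[where x = D1], rule exI[where x = D2])
    apply (rule exI[where x = t], rule exI[where x = D1'], rule exI[where x = D2'])
    unfolding eq' T'_def[symmetric] using v1 v2 T' c poly d1 d2 by blast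
qed

end
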